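(* Let $X$ be a strongly connected finite digraph with $\delta(X)=0$. Then $\#\mathcal{R}(X)=|m(X)|$, where $\mathcal{R}(X)=\mathcal{BF}_X(\mathbb{Z}V_X)/\mathcal{BF}_X(\mathcal{L}(X))$ and $m(X)=g_X^*(1)/\#\mathrm{BF}(X)_{\rm tors}$.
   Context: Digraph $X=(V_X,E_X)$ with incidence $e\mapsto(o(e),t(e))$; strongly connected means a directed path exists between any two distinct vertices. For finite $X$: $\mathcal{A}_X(v)=\sum_{o(e)=v}t(e)$ on $\mathbb{Z}V_X$, $\mathcal{BF}_X=\mathcal{I}-\mathcal{A}_X$, $\mathrm{BF}(X)=\mathrm{coker}\,\mathcal{BF}_X$, $g_X(u)=\det(\mathcal{I}-\mathcal{A}_Xu)\in\mathbb{Z}[u]$, $r_X=\mathrm{ord}_{u=1}g_X$, $g_X^*(1)$ the coefficient of $(u-1)^{r_X}$ in the Taylor expansion of $g_X$ at $1$, $\delta(X)=r_X-\mathrm{rank}_{\mathbb{Z}}\mathrm{BF}(X)$. When $\delta(X)=0$, $g_X^*(1)$ is a nonzero integer multiple of $\#\mathrm{BF}(X)_{\rm tors}$, and $m(X)$ denotes this integer. $\mathcal{L}(X)=\mathbb{Z}V_X\cap\mathrm{Im}(\mathcal{BF}_{\mathbb{Q}})$ inside $\mathbb{Q}V_X$, where $\mathcal{BF}_{\mathbb{Q}}$ is the extension of $\mathcal{BF}_X$ to $\mathbb{Q}V_X$. *)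

theory Defs
  imports "HOL-Analysis.Analysis" "HOL-Computational_Algebra.Polynomial"
begin

text \<open>A finite digraph X is given by a finite vertex type 'v (V_X = UNIV), a finite
  edge type 'e (E_X = UNIV) and the incidence maps src (=o), tgt (=t) :: 'e => 'v
  (multiple edges and loops allowed).  The free module ZV_X is int^'v, QV_X is rat^'v.\<close>

definition strongly_connected :: "('e::finite \<Rightarrow> 'v::finite) \<Rightarrow> ('e \<Rightarrow> 'v) \<Rightarrow> bool" where
  "strongly_connected src tgt \<longleftrightarrow>
     (\<forall>u w. u \<noteq> w \<longrightarrow> (u, w) \<in> {(src e, tgt e) | e. True}\<^sup>+)"

text \<open>Matrix of A_X w.r.t. the vertex basis: entry (w,v) = number of edges from v to w,
  so that A_X(v) = sum over edges e with o(e)=v of t(e).\<close>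
definition adj :: "('e::finite \<Rightarrow> 'v::finite) \<Rightarrow> ('e \<Rightarrow> 'v) \<Rightarrow> int^'v^'v" where
  "adj src tgt = (\<chi> w v. int (card {e. src e = v \<and> tgt e = w}))"

definition BF_mat :: "('e::finite \<Rightarrow> 'v::finite) \<Rightarrow> ('e \<Rightarrow> 'v) \<Rightarrow> int^'v^'v" where
  "BF_mat src tgt = mat 1 - adj src tgt"

text \<open>BF_X applied to x in ZV_X, and its extension BF_Q to QV_X.\<close>
definition BF :: "('e::finite \<Rightarrow> 'v::finite) \<Rightarrow> ('e \<Rightarrow> 'v) \<Rightarrow> int^'v \<Rightarrow> int^'v" where
  "BF src tgt x = BF_mat src tgt *v x"

definition BF_Q :: "('e::finite \<Rightarrow> 'v::finite) \<Rightarrow> ('e \<Rightarrow> 'v) \<Rightarrow> rat^'v \<Rightarrow> rat^'v" where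
  "BF_Q src tgt y = (\<chi> i j. (of_int (BF_mat src tgt $ i $ j) :: rat)) *v y"

text \<open>g_X(u) = det(I - A_X u) in Z[u].\<close>
definition g_poly :: "('e::finite \<Rightarrow> 'v::finite) \<Rightarrow> ('e \<Rightarrow> 'v) \<Rightarrow> int poly" where
  "g_poly src tgt = det (\<chi> i j. (if i = j then 1 else 0) - [:0, adj src tgt $ i $ j:])"

definition r_X :: "('e::finite \<Rightarrow> 'v::finite) \<Rightarrow> ('e \<Rightarrow> 'v) \<Rightarrow> nat" where
  "r_X src tgt = order 1 (g_poly src tgt)"

text \<open>g_X^*(1): coefficient of (u-1)^{r_X} in the Taylor expansion of g_X at 1,
  i.e. the coefficient of u^{r_X} in g_X(u+1).\<close>
definition g_star :: "('e::finite \<Rightarrow> 'v::finite) \<Rightarrow> ('e \<Rightarrow> 'v) \<Rightarrow> int" where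
  "g_star src tgt = coeff (pcompose (g_poly src tgt) [:1, 1:]) (r_X src tgt)"

text \<open>Cardinality of the quotient group G/H (G, H subgroups of int^'v, H \<subseteq> G):
  number of cosets x + H with x in G.\<close>
definition quot_card :: "(int^'v::finite) set \<Rightarrow> (int^'v) set \<Rightarrow> nat" where
  "quot_card G H = card ((\<lambda>x. (\<lambda>h. x + h) ` H) ` G)"

text \<open>Z-rank of the quotient G/H: maximal size of a family of elements of G whose
  classes are Z-linearly independent in G/H.\<close>
definition quot_independent :: "(int^'v::finite) set \<Rightarrow> (int^'v) set \<Rightarrow> bool" where
  "quot_independent H S \<longleftrightarrow> finite S \<and>
     (\<forall>c :: int^'v \<Rightarrow> int. (\<Sum>s\<in>S. c s *s s) \<in> H \<longrightarrow> (\<forall>s\<in>S. c s = 0))"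

definition quot_rank :: "(int^'v::finite) set \<Rightarrow> (int^'v) set \<Rightarrow> nat" where
  "quot_rank G H = Sup {card S | S. S \<subseteq> G \<and> quot_independent H S}"

text \<open>Torsion subgroup of G/H, represented by its preimage in G.\<close>
definition quot_tors :: "(int^'v::finite) set \<Rightarrow> (int^'v) set \<Rightarrow> (int^'v) set" where
  "quot_tors G H = {x \<in> G. \<exists>k::int. k \<noteq> 0 \<and> k *s x \<in> H}"

text \<open>rank_Z BF(X), #BF(X)_tors, delta(X), m(X).\<close>
definition rank_BF :: "('e::finite \<Rightarrow> 'v::finite) \<Rightarrow> ('e \<Rightarrow> 'v) \<Rightarrow> nat" where
  "rank_BF src tgt = quot_rank UNIV (range (BF src tgt))"

definition tors_BF :: "('e::finite \<Rightarrow> 'v::finite) \<Rightarrow> ('e \<Rightarrow> 'v) \<Rightarrow> nat" where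
  "tors_BF src tgt = quot_card (quot_tors UNIV (range (BF src tgt))) (range (BF src tgt))"

definition delta :: "('e::finite \<Rightarrow> 'v::finite) \<Rightarrow> ('e \<Rightarrow> 'v) \<Rightarrow> int" where
  "delta src tgt = int (r_X src tgt) - int (rank_BF src tgt)"

definition m_X :: "('e::finite \<Rightarrow> 'v::finite) \<Rightarrow> ('e \<Rightarrow> 'v) \<Rightarrow> rat" where
  "m_X src tgt = of_int (g_star src tgt) / of_nat (tors_BF src tgt)"

text \<open>L(X) = ZV_X \<inter> Im(BF_Q) inside QV_X.\<close>
definition L_X :: "('e::finite \<Rightarrow> 'v::finite) \<Rightarrow> ('e \<Rightarrow> 'v) \<Rightarrow> (int^'v) set" where
  "L_X src tgt = {x. \<exists>y. BF_Q src tgt y = (\<chi> i. of_int (x $ i))}"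

text \<open>#R(X) where R(X) = BF_X(ZV_X) / BF_X(L(X)).\<close>
definition card_R :: "('e::finite \<Rightarrow> 'v::finite) \<Rightarrow> ('e \<Rightarrow> 'v) \<Rightarrow> nat" where
  "card_R src tgt = quot_card (range (BF src tgt)) (BF src tgt ` L_X src tgt)"

end

theory Submission
  imports Defs
begin

section \<open>Cosets\<close>

definition cosets :: "'a::ab_group_add set \<Rightarrow> 'a set \<Rightarrow> 'a set set" where
  "cosets A H = (\<lambda>x. (\<lambda>h. x + h) ` H) ` A"

definition qc :: "'a::ab_group_add set \<Rightarrow> 'a set \<Rightarrow> nat" where
  "qc A H = card (cosets A H)"

definition sgrp :: "'a::ab_group_add set \<Rightarrow> bool" where
  "sgrp H \<longleftrightarrow> 0 \<in> H \<and> (\<forall>x\<in>H. \<forall>y\<in>H. x - y \<in> H)"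

lemma sgrp_add: "sgrp H \<Longrightarrow> x \<in> H \<Longrightarrow> y \<in> H \<Longrightarrow> x + y \<in> H"
  unfolding sgrp_def by (metis diff_0 diff_minus_eq_add)

lemma sgrp_minus: "sgrp H \<Longrightarrow> x \<in> H \<Longrightarrow> - x \<in> H"
  unfolding sgrp_def by (metis diff_0)

lemma sgrp_diff: "sgrp H \<Longrightarrow> x \<in> H \<Longrightarrow> y \<in> H \<Longrightarrow> x - y \<in> H"
  unfolding sgrp_def by blast

lemma sgrp_zero: "sgrp H \<Longrightarrow> 0 \<in> H"
  unfolding sgrp_def by blast

lemma coset_eq:
  assumes "sgrp H"
  shows "((\<lambda>h. x + h) ` H = (\<lambda>h. y + h) ` H) \<longleftrightarrow> x - y \<in> H"
proof
  assume e: "(\<lambda>h. x + h) ` H = (\<lambda>h. y + h) ` H"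
  have "x \<in> (\<lambda>h. x + h) ` H" using sgrp_zero[OF assms] by force
  then obtain h where "h \<in> H" "x = y + h" using e by auto
  then show "x - y \<in> H" by (simp add: algebra_simps)
next
  assume k: "x - y \<in> H"
  show "(\<lambda>h. x + h) ` H = (\<lambda>h. y + h) ` H"
  proof (intro set_eqI iffI)
    fix z assume "z \<in> (\<lambda>h. x + h) ` H"
    then obtain h where h: "h \<in> H" "z = x + h" by auto
    have "(x - y) + h \<in> H" using sgrp_add[OF assms k h(1)] .
    moreover have "z = y + ((x - y) + h)" using h by (simp add: algebra_simps)
    ultimately show "z \<in> (\<lambda>h. y + h) ` H" by blast
  next
    fix z assume "z \<in> (\<lambda>h. y + h) ` H"
    then obtain h where h: "h \<in> H" "z = y + h" by auto
    have "h - (x - y) \<in> H" using sgrp_diff[OF assms h(1) k] .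
    moreover have "z = x + (h - (x - y))" using h by (simp add: algebra_simps)
    ultimately show "z \<in> (\<lambda>h. x + h) ` H" by blast
  qed
qed

lemma image_fiber_aux:
  assumes "\<forall>x\<in>A. \<forall>y\<in>A. f x = f y \<longrightarrow> g x = g y"
  shows "g ` A = (\<lambda>u. g (inv_into A f u)) ` (f ` A)"
proof -
  have "\<And>x. x \<in> A \<Longrightarrow> g (inv_into A f (f x)) = g x"
    using assms by (metis f_inv_into_f imageI inv_into_into)
  then show ?thesis by (auto simp: image_iff)
qed

lemma card_image_fiber:
  assumes "\<forall>x\<in>A. \<forall>y\<in>A. f x = f y \<longleftrightarrow> g x = g y"
  shows "card (f ` A) = card (g ` A) \<and> (finite (f ` A) \<longleftrightarrow> finite (g ` A))"
proof -
  let ?phi = "\<lambda>u. g (inv_into A f u)"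
  have e: "g ` A = ?phi ` (f ` A)" using image_fiber_aux[of A f g] assms by blast
  have "inj_on ?phi (f ` A)"
  proof (rule inj_onI)
    fix u v assume u: "u \<in> f ` A" and v: "v \<in> f ` A" and eq: "?phi u = ?phi v"
    have iu: "inv_into A f u \<in> A" using u by (simp add: inv_into_into)
    have iv: "inv_into A f v \<in> A" using v by (simp add: inv_into_into)
    have "f (inv_into A f u) = f (inv_into A f v)" using assms iu iv eq by blast
    then show "u = v" using u v by (simp add: f_inv_into_f)
  qed
  then show ?thesis using e card_image finite_image_iff by metis
qed

lemma finite_image_coarser:
  assumes "finite (f ` A)" "\<forall>x\<in>A. \<forall>y\<in>A. f x = f y \<longrightarrow> g x = g y"
  shows "finite (g ` A)"
  using image_fiber_aux[OF assms(2)] assms(1) by simp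

lemma qc_transfer:
  fixes A :: "'a::ab_group_add set" and A' :: "'b::ab_group_add set"
  assumes "sgrp H" "sgrp H'" "f ` A = A'"
    "\<forall>x\<in>A. \<forall>y\<in>A. x - y \<in> H \<longleftrightarrow> f x - f y \<in> H'"
  shows "qc A H = qc A' H' \<and> (finite (cosets A H) \<longleftrightarrow> finite (cosets A' H'))"
proof -
  let ?c = "\<lambda>x. (\<lambda>h. x + h) ` H"
  let ?c' = "\<lambda>x. (\<lambda>h. x + h) ` H'"
  have "\<forall>x\<in>A. \<forall>y\<in>A. ?c x = ?c y \<longleftrightarrow> ?c' (f x) = ?c' (f y)"
    using assms coset_eq[OF assms(1)] coset_eq[OF assms(2)] by simp
  from card_image_fiber[OF this]
  have *: "card (?c ` A) = card ((\<lambda>x. ?c' (f x)) ` A) \<and>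
     (finite (?c ` A) \<longleftrightarrow> finite ((\<lambda>x. ?c' (f x)) ` A))" .
  have "(\<lambda>x. ?c' (f x)) ` A = ?c' ` A'"
    using assms(3) by auto
  then show ?thesis using * unfolding qc_def cosets_def by simp
qed

lemma qc_mult:
  fixes A :: "'a::ab_group_add set"
  assumes sA: "sgrp A" and sG: "sgrp G" and sH: "sgrp H" and HG: "H \<subseteq> G" and GA: "G \<subseteq> A"
    and fAG: "finite (cosets A G)" and fGH: "finite (cosets G H)"
  shows "finite (cosets A H) \<and> qc A H = qc A G * qc G H"
proof -
  let ?cG = "\<lambda>x. (\<lambda>h. x + h) ` G"
  let ?cH = "\<lambda>x. (\<lambda>h. x + h) ` H"
  define F where "F c = ?cH ` {x\<in>A. ?cG x = c}" for c
  have U: "cosets A H = (\<Union>c\<in>cosets A G. F c)"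
    unfolding cosets_def F_def by auto
  have Fc: "card (F c) = qc G H \<and> finite (F c)" if c: "c \<in> cosets A G" for c
  proof -
    obtain a where a: "a \<in> A" "c = ?cG a" using c unfolding cosets_def by auto
    have "{x\<in>A. ?cG x = c} = (\<lambda>g. a + g) ` G"
    proof (intro set_eqI iffI)
      fix x assume "x \<in> {x\<in>A. ?cG x = c}"
      then have "x \<in> A" "x - a \<in> G" using coset_eq[OF sG] a by auto
      then show "x \<in> (\<lambda>g. a + g) ` G" by (auto simp: image_iff intro!: bexI[of _ "x - a"])
    next
      fix x assume "x \<in> (\<lambda>g. a + g) ` G"
      then obtain g where g: "g \<in> G" "x = a + g" by auto
      then have "x \<in> A" using sgrp_add[OF sA a(1)] GA by auto
      moreover have "x - a \<in> G" using g by simp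
      ultimately show "x \<in> {x\<in>A. ?cG x = c}" using coset_eq[OF sG] a by auto
    qed
    then have "F c = (\<lambda>g. ?cH (a + g)) ` G" unfolding F_def by (simp add: image_comp)
    moreover have "\<forall>x\<in>G. \<forall>y\<in>G. (\<lambda>g. ?cH (a + g)) x = (\<lambda>g. ?cH (a + g)) y \<longleftrightarrow> ?cH x = ?cH y"
      using coset_eq[OF sH] by simp
    ultimately show ?thesis using card_image_fiber[of G "\<lambda>g. ?cH (a + g)" ?cH] fGH
      unfolding qc_def cosets_def by simp
  qed
  have disj: "\<forall>c\<in>cosets A G. \<forall>c'\<in>cosets A G. c \<noteq> c' \<longrightarrow> F c \<inter> F c' = {}"
  proof (intro ballI impI)
    fix c c' assume c: "c \<in> cosets A G" and c': "c' \<in> cosets A G" and ne: "c \<noteq> c'"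
    show "F c \<inter> F c' = {}"
    proof (rule ccontr)
      assume "F c \<inter> F c' \<noteq> {}"
      then obtain x y where x: "x \<in> A" "?cG x = c" and y: "y \<in> A" "?cG y = c'" and e: "?cH x = ?cH y"
        unfolding F_def by auto
      have "x - y \<in> H" using e coset_eq[OF sH] by blast
      then have "x - y \<in> G" using HG by auto
      then have "?cG x = ?cG y" using coset_eq[OF sG] by blast
      then show False using x y ne by simp
    qed
  qed
  have fin: "finite (cosets A H)" using U fAG Fc by auto
  have "card (\<Union>c\<in>cosets A G. F c) = (\<Sum>c\<in>cosets A G. card (F c))"
    by (rule card_UN_disjoint[OF fAG]) (use Fc disj in auto)
  then have "qc A H = (\<Sum>c\<in>cosets A G. card (F c))"
    unfolding qc_def U .
  also have "\<dots> = (\<Sum>c\<in>cosets A G. qc G H)" using Fc by (intro sum.cong) auto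
  also have "\<dots> = qc A G * qc G H" unfolding qc_def by simp
  finally show ?thesis using fin by simp
qed

lemma qc_mult':
  fixes A :: "'a::ab_group_add set"
  assumes sA: "sgrp A" and sG: "sgrp G" and sH: "sgrp H" and HG: "H \<subseteq> G" and GA: "G \<subseteq> A"
    and fAH: "finite (cosets A H)"
  shows "qc A H = qc A G * qc G H"
proof -
  have "finite (cosets A G)"
    using finite_image_coarser[of "\<lambda>x. (\<lambda>h. x + h) ` H" A "\<lambda>x. (\<lambda>h. x + h) ` G"] fAH
      coset_eq[OF sH] coset_eq[OF sG] HG unfolding cosets_def by blast
  moreover have "finite (cosets G H)"
    using fAH GA unfolding cosets_def by (meson finite_subset image_mono)
  ultimately show ?thesis using qc_mult assms by blast
qed


section \<open>Integer matrices\<close>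

definition ratM :: "int^'n^'m \<Rightarrow> rat^'n^'m" where
  "ratM X = (\<chi> i j. of_int (X$i$j))"

definition ratv :: "int^'n \<Rightarrow> rat^'n" where
  "ratv x = (\<chi> i. of_int (x$i))"

definition unimod :: "int^'n^'n \<Rightarrow> bool" where
  "unimod V \<longleftrightarrow> (\<exists>U. V ** U = mat 1 \<and> U ** V = mat 1)"

definition idx :: "int^'n^'n \<Rightarrow> nat" where
  "idx X = qc UNIV (range ((*v) X))"

lemma ratM_mult: "ratM (X ** Y) = ratM X ** ratM Y"
  by (simp add: ratM_def matrix_matrix_mult_def vec_eq_iff of_int_sum)

lemma ratv_mult: "ratv (X *v x) = ratM X *v ratv x"
  by (simp add: ratM_def ratv_def matrix_vector_mult_def vec_eq_iff of_int_sum)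

lemma ratv_inj: "ratv x = ratv y \<Longrightarrow> x = y"
  by (simp add: ratv_def vec_eq_iff)

lemma ratv_add: "ratv (x + y) = ratv x + ratv y"
  by (simp add: ratv_def vec_eq_iff)

lemma ratv_diff: "ratv (x - y) = ratv x - ratv y"
  by (simp add: ratv_def vec_eq_iff)

lemma ratv_0: "ratv 0 = 0"
  by (simp add: ratv_def vec_eq_iff)

lemma ratv_smult: "ratv (c *s x) = of_int c *s ratv x"
  by (simp add: ratv_def vec_eq_iff)

lemma ratM_mat1: "ratM (mat 1) = mat 1"
  by (simp add: ratM_def mat_def vec_eq_iff)

lemma det_hom:
  fixes h :: "'a::comm_ring_1 \<Rightarrow> 'b::comm_ring_1"
  assumes hadd: "\<And>x y. h (x + y) = h x + h y" and hmul: "\<And>x y. h (x * y) = h x * h y"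
    and h0: "h 0 = 0" and h1: "h 1 = 1" and hneg: "\<And>x. h (- x) = - h x"
  shows "h (det A) = det (\<chi> i j. h (A$i$j))"
proof -
  have hs: "h (sum f S) = sum (\<lambda>x. h (f x)) S" for f :: "_ \<Rightarrow> 'a" and S
    using sum_comp_morphism[of h f S, OF h0 hadd] by (simp add: comp_def)
  have hp: "h (prod f S) = prod (\<lambda>x. h (f x)) S" for f :: "_ \<Rightarrow> 'a" and S
    by (induction S rule: infinite_finite_induct) (auto simp: hmul h1)
  have hsg: "h (of_int (sign p)) = of_int (sign p)" for p :: "'n \<Rightarrow> 'n"
    by (cases rule: sign_cases[of p]) (simp_all add: h1 hneg)
  show ?thesis
    unfolding det_def hs hmul hp hsg by simp
qed

lemma det_ratM: "det (ratM X) = of_int (det X)"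
  unfolding ratM_def by (rule det_hom[symmetric]) auto

lemma inj_of_det:
  fixes X :: "int^'n^'n"
  assumes "det X \<noteq> 0"
  shows "inj ((*v) X)"
proof (rule injI)
  fix x y assume e: "X *v x = X *v y"
  have "det (ratM X) \<noteq> 0" using assms by (simp add: det_ratM)
  then have "invertible (ratM X)" by (simp add: invertible_det_nz)
  then obtain Y where Y: "Y ** ratM X = mat 1" unfolding invertible_def by blast
  have "ratM X *v ratv x = ratM X *v ratv y" using e by (metis ratv_mult)
  then have "Y *v (ratM X *v ratv x) = Y *v (ratM X *v ratv y)" by simp
  then have "ratv x = ratv y" by (simp add: matrix_vector_mul_assoc Y)
  then show "x = y" by (rule ratv_inj)
qed

lemma sgrp_UNIV: "sgrp UNIV" by (simp add: sgrp_def)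

lemma sgrp_image:
  fixes X :: "int^'n^'m"
  shows "sgrp S \<Longrightarrow> sgrp ((*v) X ` S)"
  unfolding sgrp_def
proof (elim conjE, intro conjI ballI)
  assume "0 \<in> S"
  then show "0 \<in> (*v) X ` S" by (metis image_eqI matrix_vector_mult_0_right)
next
  fix x y assume "\<forall>x\<in>S. \<forall>y\<in>S. x - y \<in> S" "x \<in> (*v) X ` S" "y \<in> (*v) X ` S"
  then show "x - y \<in> (*v) X ` S"
    by (auto simp: matrix_vector_mult_diff_distrib[symmetric] image_iff)
qed

lemma sgrp_range:
  fixes X :: "int^'n^'m"
  shows "sgrp (range ((*v) X))"
  using sgrp_image[OF sgrp_UNIV] by blast

lemma unimod_det:
  assumes "unimod V" shows "\<bar>det V\<bar> = 1"
proof -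
  obtain U where "V ** U = mat 1" using assms unfolding unimod_def by blast
  then have "det V * det U = 1" by (metis det_I det_mul)
  then show ?thesis by (auto simp: zmult_eq_1_iff)
qed

lemma unimod_mult: "unimod V \<Longrightarrow> unimod W \<Longrightarrow> unimod (V ** W)"
  unfolding unimod_def
proof (elim exE conjE)
  fix U U'
  assume a: "V ** U = mat 1" "U ** V = mat 1" "W ** U' = mat 1" "U' ** W = mat 1"
  have "(V ** W) ** (U' ** U) = mat 1"
    by (metis a(1) a(3) matrix_mul_assoc matrix_mul_rid)
  moreover have "(U' ** U) ** (V ** W) = mat 1"
    by (metis a(2) a(4) matrix_mul_assoc matrix_mul_rid)
  ultimately show "\<exists>U. V ** W ** U = mat 1 \<and> U ** (V ** W) = mat 1" by blast
qed

lemma unimod_mat1: "unimod (mat 1)"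
  unfolding unimod_def by (auto intro: exI[of _ "mat 1"])

lemma unimod_surj:
  assumes "unimod V" shows "range ((*v) V) = UNIV"
proof -
  obtain U where "V ** U = mat 1" using assms unfolding unimod_def by blast
  then have "V *v (U *v y) = y" for y by (simp add: matrix_vector_mul_assoc)
  then show ?thesis by (metis surj_def)
qed

lemma idx_left:
  fixes X :: "int^'n^'n"
  assumes "unimod V"
  shows "idx (V ** X) = idx X \<and> (finite (cosets UNIV (range ((*v) (V ** X)))) \<longleftrightarrow> finite (cosets UNIV (range ((*v) X))))"
proof -
  obtain U where U: "V ** U = mat 1" "U ** V = mat 1" using assms unfolding unimod_def by blast
  have "\<forall>x\<in>UNIV. \<forall>y\<in>UNIV. x - y \<in> range ((*v) X) \<longleftrightarrow> V *v x - V *v y \<in> range ((*v) (V ** X))"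
  proof (intro ballI iffI)
    fix x y :: "int^'n"
    assume "x - y \<in> range ((*v) X)"
    then obtain z where "x - y = X *v z" by auto
    then have "V *v x - V *v y = (V ** X) *v z"
      by (metis matrix_vector_mul_assoc matrix_vector_mult_diff_distrib)
    then show "V *v x - V *v y \<in> range ((*v) (V ** X))" by auto
  next
    fix x y :: "int^'n"
    assume "V *v x - V *v y \<in> range ((*v) (V ** X))"
    then obtain z where "V *v x - V *v y = (V ** X) *v z" by auto
    then have "U *v (V *v (x - y)) = U *v (V *v (X *v z))"
      by (metis matrix_vector_mul_assoc matrix_vector_mult_diff_distrib)
    then have "x - y = X *v z" by (simp add: matrix_vector_mul_assoc matrix_mul_assoc U)
    then show "x - y \<in> range ((*v) X)" by auto
  qed
  from qc_transfer[OF sgrp_range sgrp_range unimod_surj[OF assms] this]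
  show ?thesis unfolding idx_def by simp
qed

lemma idx_right:
  fixes X :: "int^'n^'n"
  assumes "unimod V"
  shows "range ((*v) (X ** V)) = range ((*v) X)"
proof -
  have "range ((*v) (X ** V)) = (*v) X ` range ((*v) V)"
    by (auto simp: matrix_vector_mul_assoc[symmetric] image_iff)
  then show ?thesis using unimod_surj[OF assms] by simp
qed

lemma idx_mat1: "idx (mat 1 :: int^'n^'n) = 1 \<and> finite (cosets UNIV (range ((*v) (mat 1 :: int^'n^'n))))"
proof -
  have r: "range ((*v) (mat 1 :: int^'n^'n)) = UNIV" by simp
  have "cosets (UNIV :: (int^'n) set) UNIV = {UNIV}"
    unfolding cosets_def
    by (auto simp: image_iff)
  then show ?thesis unfolding idx_def qc_def r by simp
qed

lemma idx_unimod:
  assumes "unimod V"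
  shows "idx V = 1 \<and> finite (cosets UNIV (range ((*v) V)))"
  using idx_left[OF assms, of "mat 1"] idx_mat1 by simp

lemma idx_mult:
  fixes X Y :: "int^'n^'n"
  assumes dX: "det X \<noteq> 0" and fX: "finite (cosets UNIV (range ((*v) X)))"
    and fY: "finite (cosets UNIV (range ((*v) Y)))"
  shows "idx (X ** Y) = idx X * idx Y \<and> finite (cosets UNIV (range ((*v) (X ** Y))))"
proof -
  have inj: "inj ((*v) X)" by (rule inj_of_det[OF dX])
  have R: "range ((*v) (X ** Y)) = (*v) X ` range ((*v) Y)"
    by (auto simp: matrix_vector_mul_assoc[symmetric] image_iff)
  have "\<forall>x\<in>UNIV. \<forall>y\<in>UNIV. x - y \<in> range ((*v) Y) \<longleftrightarrow> X *v x - X *v y \<in> range ((*v) (X ** Y))"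
  proof (intro ballI iffI)
    fix x y :: "int^'n"
    assume "x - y \<in> range ((*v) Y)"
    then show "X *v x - X *v y \<in> range ((*v) (X ** Y))"
      unfolding R by (auto simp: matrix_vector_mult_diff_distrib[symmetric])
  next
    fix x y :: "int^'n"
    assume "X *v x - X *v y \<in> range ((*v) (X ** Y))"
    then obtain z where "X *v (x - y) = X *v (Y *v z)"
      unfolding R by (auto simp: matrix_vector_mult_diff_distrib)
    then have "x - y = Y *v z" using inj by (simp add: inj_eq)
    then show "x - y \<in> range ((*v) Y)" by auto
  qed
  from qc_transfer[OF sgrp_range sgrp_range _ this, of "range ((*v) X)"]
  have T: "qc UNIV (range ((*v) Y)) = qc (range ((*v) X)) (range ((*v) (X ** Y))) \<and>
     (finite (cosets UNIV (range ((*v) Y))) \<longleftrightarrow> finite (cosets (range ((*v) X)) (range ((*v) (X ** Y)))))"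
    by simp
  have sub: "range ((*v) (X ** Y)) \<subseteq> range ((*v) X)" unfolding R by auto
  from qc_mult[OF sgrp_UNIV sgrp_range sgrp_range sub _ fX] T fY
  show ?thesis unfolding idx_def by auto
qed

lemma idx_diag:
  fixes d :: int and a :: "'n::finite"
  assumes "d \<noteq> 0"
  defines "D \<equiv> (\<chi> i j. if i = j then (if i = a then d else 1) else 0) :: int^'n^'n"
  shows "idx D = nat \<bar>d\<bar> \<and> finite (cosets UNIV (range ((*v) D)))"
proof -
  have Dv: "D *v x = (\<chi> i. if i = a then d * x$i else x$i)" for x
    unfolding D_def matrix_vector_mult_def
    by (auto simp: vec_eq_iff if_distrib[of "\<lambda>u. u * _"] cong: if_cong)
  have R: "range ((*v) D) = {y. d dvd y$a}"
  proof (intro set_eqI iffI)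
    fix y assume "y \<in> range ((*v) D)" then show "y \<in> {y. d dvd y$a}" by (auto simp: Dv)
  next
    fix y assume "y \<in> {y. d dvd y$a}"
    then obtain k where k: "y$a = d * k" by auto
    have "D *v (\<chi> i. if i = a then k else y$i) = y" by (simp add: Dv vec_eq_iff k)
    then show "y \<in> range ((*v) D)" by (metis rangeI)
  qed
  let ?f = "\<lambda>y::int^'n. y$a mod \<bar>d\<bar>"
  have sgz: "sgrp ({0}::int set)" by (simp add: sgrp_def)
  have img: "?f ` UNIV = {0..<\<bar>d\<bar>}"
  proof (intro set_eqI iffI)
    fix u assume "u \<in> ?f ` UNIV" then show "u \<in> {0..<\<bar>d\<bar>}" using assms by auto
  next
    fix u assume u: "u \<in> {0..<\<bar>d\<bar>}"
    have "?f (\<chi> i. u) = u" using u by simp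
    then show "u \<in> ?f ` UNIV" by (metis rangeI)
  qed
  have "\<forall>x\<in>UNIV. \<forall>y\<in>UNIV. x - y \<in> range ((*v) D) \<longleftrightarrow> ?f x - ?f y \<in> {0}"
    unfolding R by (auto simp: mod_eq_dvd_iff)
  from qc_transfer[OF sgrp_range sgz img this]
  have T: "qc UNIV (range ((*v) D)) = qc {0..<\<bar>d\<bar>} {0} \<and> (finite (cosets UNIV (range ((*v) D))) \<longleftrightarrow> finite (cosets {0..<\<bar>d\<bar>} {0::int}))" .
  have "cosets {0..<\<bar>d\<bar>} {0::int} = (\<lambda>x. {x}) ` {0..<\<bar>d\<bar>}" unfolding cosets_def by simp
  moreover have "card ((\<lambda>x. {x}) ` {0..<\<bar>d\<bar>}) = card {0..<\<bar>d\<bar>}"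
    by (rule card_image) (auto simp: inj_on_def)
  ultimately show ?thesis using T unfolding idx_def qc_def by simp
qed


section \<open>Euclidean row reduction\<close>

lemma sum_delta_mult: "(\<Sum>m\<in>(UNIV::'n::finite set). f m * (if m = k then g m else 0)) = (f k * g k :: 'a::comm_semiring_1)"
  by (simp add: if_distrib[of "\<lambda>x. f _ * x"] cong: if_cong)

lemma sum_delta_mult2: "(\<Sum>m\<in>(UNIV::'n::finite set). (if m = k then g m else 0) * f m) = (g k * f k :: 'a::comm_semiring_1)"
  by (simp add: if_distrib[of "\<lambda>x. x * f _"] cong: if_cong)

definition shapeF :: "'n set \<Rightarrow> int^'n^'n \<Rightarrow> bool" where
  "shapeF F W \<longleftrightarrow> (\<forall>i k. i \<notin> F \<longrightarrow> W$i$k = (if i = k then 1 else 0)) \<and>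
     (\<forall>i k. i \<in> F \<longrightarrow> k \<notin> F \<longrightarrow> W$i$k = 0)"

definition elem :: "'n::finite \<Rightarrow> 'n \<Rightarrow> int \<Rightarrow> int^'n^'n" where
  "elem q p s = (\<chi> i k. (if i = k then 1 else 0) + (if i = q \<and> k = p then s else 0))"

lemma elem_mult:
  fixes X :: "int^'m^'n::finite"
  shows "(elem q p s ** X)$i$k = X$i$k + (if i = q then s * X$p$k else 0)"
proof -
  have "(elem q p s ** X)$i$k = (\<Sum>l\<in>UNIV. (if l = i then 1 else 0) * X$l$k + (if l = p then (if i = q then s else 0) else 0) * X$l$k)"
    unfolding matrix_matrix_mult_def elem_def
    by (auto intro!: sum.cong simp: algebra_simps)
  also have "\<dots> = X$i$k + (if i = q then s * X$p$k else 0)"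
    unfolding sum.distrib sum_delta_mult2 by simp
  finally show ?thesis .
qed

lemma elem_unimod:
  assumes "q \<noteq> p"
  shows "unimod (elem q p s)"
proof -
  have "elem q p s ** elem q p (-s) = mat 1" "elem q p (-s) ** elem q p s = mat 1"
    using assms by (simp_all only: vec_eq_iff elem_mult) (auto simp: elem_def mat_def)
  then show ?thesis unfolding unimod_def by blast
qed

lemma shapeF_elem: "q \<in> F \<Longrightarrow> p \<in> F \<Longrightarrow> shapeF F (elem q p s)"
  unfolding shapeF_def elem_def by auto

lemma shapeF_mat1: "shapeF F (mat 1)"
  unfolding shapeF_def by (auto simp: mat_def)

lemma shapeF_mult:
  assumes W: "shapeF F W" and W': "shapeF F W'"
  shows "shapeF F (W ** W')"
  unfolding shapeF_def
proof (intro conjI allI impI)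
  fix i k assume i: "i \<notin> F"
  have "(W ** W')$i$k = (\<Sum>l\<in>UNIV. W'$l$k * (if l = i then 1 else 0))"
    unfolding matrix_matrix_mult_def using W i unfolding shapeF_def
    by (auto intro!: sum.cong simp: algebra_simps)
  also have "\<dots> = W'$i$k" unfolding sum_delta_mult by simp
  finally show "(W ** W')$i$k = (if i = k then 1 else 0)" using W' i unfolding shapeF_def by simp
next
  fix i k assume i: "i \<in> F" and k: "k \<notin> F"
  have "W$i$l * W'$l$k = 0" for l
    by (cases "l \<in> F") (use W W' i k in \<open>auto simp: shapeF_def\<close>)
  then show "(W ** W')$i$k = 0"
    unfolding matrix_matrix_mult_def vec_lambda_beta by (intro sum.neutral) auto
qed

lemma shapeF_rows_out:
  assumes "shapeF F W" "i \<notin> F"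
  shows "(W ** X)$i$k = X$i$k"
proof -
  have "(W ** X)$i$k = (\<Sum>l\<in>UNIV. (if l = i then 1 else 0) * X$l$k)"
    unfolding matrix_matrix_mult_def using assms unfolding shapeF_def
    by (auto intro!: sum.cong)
  then show ?thesis unfolding sum_delta_mult2 by simp
qed

lemma shapeF_rows_in:
  assumes "shapeF F W" "i \<in> F" "\<forall>l\<in>F. X$l$k = 0"
  shows "(W ** X)$i$k = 0"
proof -
  have "True" by simp
  show ?thesis
    unfolding matrix_matrix_mult_def vec_lambda_beta
    by (rule sum.neutral) (use assms in \<open>auto simp: shapeF_def\<close>)
qed

lemma euclid:
  fixes X :: "int^'n::finite^'n"
  shows "\<exists>W. unimod W \<and> shapeF F W \<and>
    (\<forall>i\<in>F. \<forall>i'\<in>F. (W ** X)$i$c \<noteq> 0 \<longrightarrow> (W ** X)$i'$c \<noteq> 0 \<longrightarrow> i = i')"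
proof (induction "\<Sum>i\<in>F. nat \<bar>X$i$c\<bar>" arbitrary: X rule: less_induct)
  case less
  show ?case
  proof (cases "\<forall>i\<in>F. \<forall>i'\<in>F. X$i$c \<noteq> 0 \<longrightarrow> X$i'$c \<noteq> 0 \<longrightarrow> i = i'")
    case True
    then show ?thesis by (intro exI[of _ "mat 1"]) (simp add: unimod_mat1 shapeF_mat1)
  next
    case False
    then obtain p0 q0 where pq0: "p0 \<in> F" "q0 \<in> F" "X$p0$c \<noteq> 0" "X$q0$c \<noteq> 0" "p0 \<noteq> q0" by blast
    obtain p q where pq: "p \<in> F" "q \<in> F" "X$p$c \<noteq> 0" "X$q$c \<noteq> 0" "p \<noteq> q" "\<bar>X$p$c\<bar> \<le> \<bar>X$q$c\<bar>"
    proof (cases "\<bar>X$p0$c\<bar> \<le> \<bar>X$q0$c\<bar>")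
      case True then show ?thesis using that pq0 by blast
    next
      case False then show ?thesis using that[of q0 p0] pq0 by auto
    qed
    define s where "s = - (X$q$c div X$p$c)"
    define E where "E = elem q p s"
    define X' where "X' = E ** X"
    have X'q: "X'$q$c = X$q$c mod X$p$c"
      unfolding X'_def E_def elem_mult s_def by (simp add: minus_div_mult_eq_mod[symmetric] algebra_simps)
    have X'i: "X'$i$c = X$i$c" if "i \<noteq> q" for i
      unfolding X'_def E_def elem_mult using that by simp
    have lt: "nat \<bar>X'$q$c\<bar> < nat \<bar>X$q$c\<bar>"
      using abs_mod_less[OF pq(3), of "X$q$c"] pq(6) X'q by simp
    have fin: "finite F" by simp
    have "(\<Sum>i\<in>F. nat \<bar>X'$i$c\<bar>) = nat \<bar>X'$q$c\<bar> + (\<Sum>i\<in>F-{q}. nat \<bar>X'$i$c\<bar>)"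
      using pq(2) by (simp add: sum.remove)
    also have "\<dots> < nat \<bar>X$q$c\<bar> + (\<Sum>i\<in>F-{q}. nat \<bar>X$i$c\<bar>)"
      using lt X'i by simp
    also have "\<dots> = (\<Sum>i\<in>F. nat \<bar>X$i$c\<bar>)"
      using pq(2) by (simp add: sum.remove)
    finally have "(\<Sum>i\<in>F. nat \<bar>X'$i$c\<bar>) < (\<Sum>i\<in>F. nat \<bar>X$i$c\<bar>)" .
    from less[OF this] obtain W' where W': "unimod W'" "shapeF F W'"
      "\<forall>i\<in>F. \<forall>i'\<in>F. (W' ** X')$i$c \<noteq> 0 \<longrightarrow> (W' ** X')$i'$c \<noteq> 0 \<longrightarrow> i = i'"
      by blast
    have "unimod (W' ** E)" using unimod_mult[OF W'(1) elem_unimod[OF pq(5)[symmetric]]] E_def by simp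
    moreover have "shapeF F (W' ** E)" using shapeF_mult[OF W'(2) shapeF_elem[OF pq(2) pq(1)]] E_def by simp
    moreover have "(W' ** E) ** X = W' ** X'" unfolding X'_def by (simp add: matrix_mul_assoc)
    ultimately show ?thesis using W'(3) by (intro exI[of _ "W' ** E"]) simp
  qed
qed


section \<open>Index equals absolute determinant\<close>

definition idshape :: "'n set \<Rightarrow> int^'n^'n \<Rightarrow> bool" where
  "idshape I C \<longleftrightarrow> (\<forall>i j. (i \<notin> I \<or> j \<notin> I) \<longrightarrow> C$i$j = (if i = j then 1 else 0))"

lemma rowop_mult:
  fixes M :: "int^'m^'n::finite"
  shows "((\<chi> l m. (if l = m then 1 else 0) + (if l = a then r m else 0)) ** M)$l$k
     = M$l$k + (if l = a then (\<Sum>m\<in>UNIV. r m * M$m$k) else 0)"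
proof -
  have "((\<chi> l m. (if l = m then 1 else 0) + (if l = a then r m else 0)) ** M)$l$k
     = (\<Sum>m\<in>UNIV. (if m = l then 1 else 0) * M$m$k) + (\<Sum>m\<in>UNIV. (if l = a then r m * M$m$k else 0))"
    unfolding matrix_matrix_mult_def vec_lambda_beta sum.distrib[symmetric]
    by (intro sum.cong refl) (auto simp: algebra_simps)
  also have "\<dots> = M$l$k + (if l = a then (\<Sum>m\<in>UNIV. r m * M$m$k) else 0)"
    unfolding sum_delta_mult2 by simp
  finally show ?thesis .
qed

lemma rowop_unimod:
  fixes r :: "'n::finite \<Rightarrow> int"
  assumes "r a = 0"
  shows "unimod (\<chi> l m. (if l = m then 1 else 0) + (if l = a then r m else 0))"
proof -
  let ?T = "\<lambda>r. (\<chi> l m. (if l = m then 1 else 0) + (if l = a then r m else 0)) :: int^'n^'n"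
  have *: "?T r ** ?T r' = mat 1" if "r a = 0" "\<And>m. r' m = - r m" for r r' :: "'n \<Rightarrow> int"
  proof -
    have "(\<Sum>m\<in>UNIV. r m * ((if m = k then 1 else 0) + (if m = a then r' k else 0))) = r k" for k
    proof -
      have "(\<Sum>m\<in>UNIV. r m * ((if m = k then 1 else 0) + (if m = a then r' k else 0)))
        = (\<Sum>m\<in>UNIV. r m * (if m = k then 1 else 0)) + (\<Sum>m\<in>UNIV. r m * (if m = a then r' k else 0))"
        by (simp add: algebra_simps sum.distrib)
      also have "\<dots> = r k" unfolding sum_delta_mult using that by simp
      finally show ?thesis .
    qed
    then show ?thesis
      unfolding vec_eq_iff rowop_mult using that by (auto simp: mat_def)
  qed
  have "?T r ** ?T (\<lambda>m. - r m) = mat 1" by (rule *) (use assms in auto)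
  moreover have "?T (\<lambda>m. - r m) ** ?T r = mat 1" by (rule *) (use assms in auto)
  ultimately show ?thesis unfolding unimod_def by blast
qed

lemma diag_right:
  fixes M :: "int^'n::finite^'m"
  shows "(M ** (\<chi> l k. if l = k then g l else 0))$i$k = M$i$k * g k"
  unfolding matrix_matrix_mult_def vec_lambda_beta
  using sum_delta_mult[of "\<lambda>l. M$i$l" k g] by simp

lemma perm_left:
  fixes M :: "int^'m^'n::finite"
  shows "((\<chi> i k. if k = tau i then 1 else 0) ** M)$i$j = M$(tau i)$j"
  unfolding matrix_matrix_mult_def vec_lambda_beta
  using sum_delta_mult2[of "tau i" "\<lambda>_. 1" "\<lambda>l. M$l$j"] by (simp add: eq_commute)

lemma CT2_aux:
  fixes I :: "'n::finite set"
  assumes "finite I"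
  shows "\<forall>C :: int^'n^'n. idshape I C \<longrightarrow> det C \<noteq> 0 \<longrightarrow>
     idx C = nat \<bar>det C\<bar> \<and> finite (cosets UNIV (range ((*v) C)))"
  using assms
proof (induction I rule: finite_induct)
  case empty
  show ?case
  proof (intro allI impI)
    fix C :: "int^'n^'n" assume "idshape {} C"
    then have "C = mat 1" unfolding idshape_def by (simp add: vec_eq_iff mat_def)
    then show "idx C = nat \<bar>det C\<bar> \<and> finite (cosets UNIV (range ((*v) C)))"
      using idx_mat1 by simp
  qed
next
  case (insert a I)
  show ?case
  proof (intro allI impI)
    fix C :: "int^'n^'n" assume sh: "idshape (insert a I) C" and dC: "det C \<noteq> 0"
    define F where "F = insert a I"
    have aF: "a \<in> F" unfolding F_def by simp
    obtain W where W: "unimod W" "shapeF F W"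
      and uniq: "\<forall>i\<in>F. \<forall>i'\<in>F. (W ** C)$i$a \<noteq> 0 \<longrightarrow> (W ** C)$i'$a \<noteq> 0 \<longrightarrow> i = i'"
      using euclid[where F=F and X=C and c=a] by blast
    define X where "X = W ** C"
    have shX: "idshape F X" unfolding idshape_def
    proof (intro allI impI)
      fix i j assume ij: "i \<notin> F \<or> j \<notin> F"
      show "X$i$j = (if i = j then 1 else 0)"
      proof (cases "i \<in> F")
        case False
        have "X$i$j = C$i$j" unfolding X_def by (rule shapeF_rows_out[OF W(2) False])
        then show ?thesis using sh False unfolding idshape_def F_def by simp
      next
        case True
        then have j: "j \<notin> F" using ij by simp
        have "\<forall>l\<in>F. C$l$j = 0" using sh j unfolding idshape_def F_def by auto
        then show ?thesis using shapeF_rows_in[OF W(2) True] True j unfolding X_def by auto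
      qed
    qed
    have detX: "\<bar>det X\<bar> = \<bar>det C\<bar>"
      unfolding X_def det_mul abs_mult using unimod_det[OF W(1)] by simp
    have "\<exists>i0\<in>F. X$i0$a \<noteq> 0"
    proof (rule ccontr)
      assume "\<not> ?thesis"
      then have "column a X = 0"
        using shX aF unfolding idshape_def by (auto simp: vec_eq_iff column_def)
      then have "det X = 0" by (rule det_zero_column(1))
      then show False using detX dC by simp
    qed
    then obtain i0 where i0: "i0 \<in> F" "X$i0$a \<noteq> 0" by blast
    have uniqX: "\<And>i. i \<in> F \<Longrightarrow> X$i$a \<noteq> 0 \<Longrightarrow> i = i0"
      using uniq i0 unfolding X_def by blast
    define tau where "tau i = (if i = i0 then a else if i = a then i0 else i)" for i
    have tt: "tau (tau i) = i" for i unfolding tau_def by auto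
    define S :: "int^'n^'n" where "S = (\<chi> i k. if k = tau i then 1 else 0)"
    have Sm: "(S ** M)$i$j = M$(tau i)$j" for M :: "int^'n^'n" and i j
      unfolding S_def by (rule perm_left)
    have "(S ** S)$i$k = (mat 1 :: int^'n^'n)$i$k" for i k
      unfolding Sm by (auto simp: S_def mat_def tt)
    then have "S ** S = mat 1" by (simp add: vec_eq_iff)
    then have uS: "unimod S" unfolding unimod_def by blast
    define Y where "Y = S ** X"
    define d where "d = X$i0$a"
    have d0: "d \<noteq> 0" using i0 d_def by simp
    have Ya: "Y$i$a = (if i = a then d else 0)" for i
    proof (cases "i = a")
      case True
      then show ?thesis unfolding Y_def Sm d_def tau_def by auto
    next
      case False
      then have ne: "tau i \<noteq> i0" unfolding tau_def by auto
      have "X$(tau i)$a = 0"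
      proof (cases "tau i \<in> F")
        case True then show ?thesis using uniqX ne by blast
      next
        case False then show ?thesis using shX aF unfolding idshape_def
          by (metis)
      qed
      then show ?thesis unfolding Y_def Sm using False by simp
    qed
    have tauF: "tau i \<in> F \<longleftrightarrow> i \<in> F" for i unfolding tau_def using i0 aF by auto
    have tau_out: "i \<notin> F \<Longrightarrow> tau i = i" for i unfolding tau_def using i0 aF by auto
    have shY: "idshape F Y" unfolding idshape_def
    proof (intro allI impI)
      fix i j assume ij: "i \<notin> F \<or> j \<notin> F"
      show "Y$i$j = (if i = j then 1 else 0)"
      proof (cases "i \<in> F")
        case False
        then show ?thesis using shX tau_out[OF False] unfolding Y_def Sm idshape_def by simp
      next
        case True
        then have j: "j \<notin> F" using ij by simp
        have "tau i \<in> F" using True tauF by simp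
        then show ?thesis using shX j True unfolding Y_def Sm idshape_def by auto
      qed
    qed
    have detY: "\<bar>det Y\<bar> = \<bar>det C\<bar>"
      unfolding Y_def det_mul abs_mult using unimod_det[OF uS] detX by simp
    define r where "r m = (if m \<noteq> a then Y$a$m else 0)" for m
    define T :: "int^'n^'n" where "T = (\<chi> l m. (if l = m then 1 else 0) + (if l = a then r m else 0))"
    define D :: "int^'n^'n" where "D = (\<chi> l k. if l = k then (if l = a then d else 1) else 0)"
    define C1 :: "int^'n^'n" where "C1 = (\<chi> i l. if i = a \<or> l = a then (if i = l then 1 else 0) else Y$i$l)"
    have uT: "unimod T" unfolding T_def by (rule rowop_unimod) (simp add: r_def)
    have C1T: "(C1 ** T)$i$k = C1$i$k + (if k \<noteq> a then C1$i$a * Y$a$k else 0)" for i k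
    proof -
      have "(C1 ** T)$i$k = (\<Sum>l\<in>UNIV. C1$i$l * (if l = k then 1 else 0)) + (\<Sum>l\<in>UNIV. C1$i$l * (if l = a then r k else 0))"
        unfolding matrix_matrix_mult_def vec_lambda_beta T_def sum.distrib[symmetric]
        by (intro sum.cong refl) (auto simp: algebra_simps)
      also have "\<dots> = C1$i$k + (if k \<noteq> a then C1$i$a * Y$a$k else 0)"
        unfolding sum_delta_mult r_def by simp
      finally show ?thesis .
    qed
    have Yfact: "Y = (C1 ** T) ** D"
      unfolding vec_eq_iff
    proof (intro allI)
      fix i k
      have "((C1 ** T) ** D)$i$k = (C1 ** T)$i$k * (if k = a then d else 1)"
        unfolding D_def by (rule diag_right)
      also have "\<dots> = Y$i$k"
        unfolding C1T using Ya by (auto simp: C1_def)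
      finally show "Y$i$k = ((C1 ** T) ** D)$i$k" by simp
    qed
    have detD: "det D = d"
    proof -
      have "det D = (\<Prod>i\<in>UNIV. if i = a then d else 1)"
        unfolding D_def by (subst det_diagonal) auto
      then show ?thesis by simp
    qed
    have detY2: "det Y = det C1 * det T * d"
      unfolding Yfact det_mul detD ..
    have dC1: "det C1 \<noteq> 0" using detY2 detY dC by auto
    have shC1: "idshape I C1" unfolding idshape_def
    proof (intro allI impI)
      fix i j assume ij: "i \<notin> I \<or> j \<notin> I"
      show "C1$i$j = (if i = j then 1 else 0)"
      proof (cases "i = a \<or> j = a")
        case True then show ?thesis unfolding C1_def by auto
      next
        case False
        then have "i \<notin> F \<or> j \<notin> F" using ij unfolding F_def by auto
        then show ?thesis using shY False unfolding C1_def idshape_def by auto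
      qed
    qed
    have IH: "idx C1 = nat \<bar>det C1\<bar> \<and> finite (cosets UNIV (range ((*v) C1)))"
      using insert.IH shC1 dC1 by blast
    have TD: "idx (T ** D) = nat \<bar>d\<bar> \<and> finite (cosets UNIV (range ((*v) (T ** D))))"
      using idx_left[OF uT, of D] idx_diag[OF d0, of a] unfolding D_def by simp
    have YI: "idx Y = idx C1 * idx (T ** D) \<and> finite (cosets UNIV (range ((*v) Y)))"
      using idx_mult[OF dC1 conjunct2[OF IH] conjunct2[OF TD]]
      unfolding Yfact matrix_mul_assoc .
    have YC: "idx Y = idx C \<and> (finite (cosets UNIV (range ((*v) Y))) \<longleftrightarrow> finite (cosets UNIV (range ((*v) C))))"
      using idx_left[OF uS, of X] idx_left[OF W(1), of C] unfolding Y_def X_def by simp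
    have "\<bar>det C\<bar> = \<bar>det C1\<bar> * \<bar>d\<bar>"
      using detY detY2 unimod_det[OF uT] by (simp add: abs_mult)
    then show "idx C = nat \<bar>det C\<bar> \<and> finite (cosets UNIV (range ((*v) C)))"
      using YI YC IH TD by (simp add: nat_mult_distrib)
  qed
qed

theorem CT2:
  fixes C :: "int^'n::finite^'n"
  assumes "det C \<noteq> 0"
  shows "idx C = nat \<bar>det C\<bar> \<and> finite (cosets UNIV (range ((*v) C)))"
  using CT2_aux[of "UNIV :: 'n set"] assms unfolding idshape_def by simp


section \<open>Adapted basis for the saturated lattice\<close>

lemma ratM_vec_comp:
  "(ratM X *v y)$i = (\<Sum>k\<in>UNIV. of_int (X$i$k) * y$k)"
  unfolding ratM_def matrix_vector_mult_def by simp

lemma CT1_aux: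
  fixes B :: "int^'n::finite^'n"
  assumes "finite P"
  shows "\<exists>V F. unimod V \<and> (\<forall>c\<in>P. \<forall>i\<in>F. (V ** B)$i$c = 0) \<and>
    (\<forall>z::rat^'n. (\<forall>i\<in>F. z$i = 0) \<longrightarrow> (\<exists>y. (\<forall>c. c \<notin> P \<longrightarrow> y$c = 0) \<and> ratM (V ** B) *v y = z))"
  using assms
proof (induction P rule: finite_induct)
  case empty
  have "\<forall>z::rat^'n. (\<forall>i\<in>UNIV. z$i = 0) \<longrightarrow> (\<exists>y. (\<forall>c. c \<notin> {} \<longrightarrow> y$c = 0) \<and> ratM (mat 1 ** B) *v y = z)"
    by (intro allI impI exI[of _ 0]) (auto simp: vec_eq_iff)
  then show ?case using unimod_mat1 by blast
next
  case (insert c P)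
  from insert.IH obtain V F where V: "unimod V" and Z: "\<forall>c\<in>P. \<forall>i\<in>F. (V ** B)$i$c = 0"
    and Srj: "\<forall>z::rat^'n. (\<forall>i\<in>F. z$i = 0) \<longrightarrow> (\<exists>y. (\<forall>c. c \<notin> P \<longrightarrow> y$c = 0) \<and> ratM (V ** B) *v y = z)"
    by blast
  define X where "X = V ** B"
  obtain W where W: "unimod W" "shapeF F W"
      and uniq: "\<forall>i\<in>F. \<forall>i'\<in>F. (W ** X)$i$c \<noteq> 0 \<longrightarrow> (W ** X)$i'$c \<noteq> 0 \<longrightarrow> i = i'"
    using euclid[where F=F and X=X and c=c] by blast
  define X' where "X' = W ** X"
  have X'eq: "X' = (W ** V) ** B" unfolding X'_def X_def by (simp add: matrix_mul_assoc)
  have uWV: "unimod (W ** V)" by (rule unimod_mult[OF W(1) V])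
  have ZP: "\<forall>c'\<in>P. \<forall>i\<in>F. X'$i$c' = 0"
  proof (intro ballI)
    fix c' i assume c': "c' \<in> P" and i: "i \<in> F"
    have "\<forall>l\<in>F. X$l$c' = 0" using Z c' unfolding X_def by blast
    then show "X'$i$c' = 0" unfolding X'_def by (rule shapeF_rows_in[OF W(2) i])
  qed
  have out: "X'$i$k = X$i$k" if "i \<notin> F" for i k
    unfolding X'_def by (rule shapeF_rows_out[OF W(2) that])
  have SrjP: "\<exists>y. (\<forall>c. c \<notin> P \<longrightarrow> y$c = 0) \<and> ratM X' *v y = z" if z: "\<forall>i\<in>F. z$i = 0" for z :: "rat^'n"
  proof -
    obtain y where y: "\<forall>c. c \<notin> P \<longrightarrow> y$c = 0" "ratM X *v y = z" using Srj z unfolding X_def by blast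
    have "(ratM X' *v y)$i = z$i" for i
    proof (cases "i \<in> F")
      case False
      then show ?thesis using y(2) out[OF False] by (simp add: ratM_vec_comp vec_eq_iff[of _ z])
    next
      case True
      have "\<forall>k. of_int (X'$i$k) * y$k = 0"
        using ZP True y(1) by (metis mult_eq_0_iff of_int_0)
      then have "(\<Sum>k\<in>UNIV. of_int (X'$i$k) * y$k) = 0" by (intro sum.neutral) auto
      then show ?thesis using z True by (simp add: ratM_vec_comp)
    qed
    then show ?thesis using y(1) by (auto simp: vec_eq_iff)
  qed
  show ?case
  proof (cases "\<forall>i\<in>F. X'$i$c = 0")
    case True
    have "\<forall>c'\<in>insert c P. \<forall>i\<in>F. ((W ** V) ** B)$i$c' = 0" using ZP True X'eq by auto
    moreover have "\<forall>z::rat^'n. (\<forall>i\<in>F. z$i = 0) \<longrightarrow> (\<exists>y. (\<forall>c'. c' \<notin> insert c P \<longrightarrow> y$c' = 0) \<and> ratM ((W ** V) ** B) *v y = z)"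
      using SrjP X'eq by fastforce
    ultimately show ?thesis using uWV by blast
  next
    case False
    then obtain i0 where i0: "i0 \<in> F" "X'$i0$c \<noteq> 0" by blast
    have un: "\<And>i. i \<in> F \<Longrightarrow> X'$i$c \<noteq> 0 \<Longrightarrow> i = i0" using uniq i0 unfolding X'_def by blast
    define F' where "F' = F - {i0}"
    have "\<forall>c'\<in>insert c P. \<forall>i\<in>F'. X'$i$c' = 0" using ZP un unfolding F'_def by auto
    moreover have "\<exists>y. (\<forall>c'. c' \<notin> insert c P \<longrightarrow> y$c' = 0) \<and> ratM X' *v y = z"
      if z: "\<forall>i\<in>F'. z$i = 0" for z :: "rat^'n"
    proof -
      define d where "d = X'$i0$c"
      define t where "t = z$i0 / of_int d"
      define y0 :: "rat^'n" where "y0 = (\<chi> k. if k = c then t else 0)"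
      have y0c: "(ratM X' *v y0)$i = of_int (X'$i$c) * t" for i
        unfolding ratM_vec_comp y0_def vec_lambda_beta
        using sum_delta_mult[of "\<lambda>k. of_int (X'$i$k)" c "\<lambda>_. t"] by simp
      define z1 where "z1 = z - ratM X' *v y0"
      have "\<forall>i\<in>F. z1$i = 0"
      proof
        fix i assume i: "i \<in> F"
        show "z1$i = 0"
        proof (cases "i = i0")
          case True
          then show ?thesis using i0 by (simp add: z1_def y0c t_def d_def)
        next
          case False
          then have "X'$i$c = 0" using un i by blast
          moreover have "z$i = 0" using z i False unfolding F'_def by simp
          ultimately show ?thesis by (simp add: z1_def y0c)
        qed
      qed
      then obtain y1 where y1: "\<forall>c. c \<notin> P \<longrightarrow> y1$c = 0" "ratM X' *v y1 = z1" using SrjP by blast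
      have "ratM X' *v (y0 + y1) = z"
        unfolding matrix_vector_right_distrib y1(2) z1_def by simp
      moreover have "\<forall>c'. c' \<notin> insert c P \<longrightarrow> (y0 + y1)$c' = 0" using y1(1) unfolding y0_def by auto
      ultimately show ?thesis by blast
    qed
    ultimately show ?thesis using uWV X'eq by blast
  qed
qed

theorem CT1:
  fixes B :: "int^'n::finite^'n"
  shows "\<exists>V F. unimod V \<and> (\<forall>i\<in>F. \<forall>k. (V ** B)$i$k = 0) \<and>
    (\<forall>z::rat^'n. (\<forall>i\<in>F. z$i = 0) \<longrightarrow> (\<exists>y. ratM (V ** B) *v y = z))"
  using CT1_aux[of "UNIV :: 'n set" B] by auto

definition Lset :: "int^'n::finite^'n \<Rightarrow> (int^'n) set" where
  "Lset B = {x. \<exists>y. ratM B *v y = ratv x}"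

lemma Lset_char:
  fixes B :: "int^'n::finite^'n"
  assumes VU: "V ** U = mat 1" "U ** V = mat 1"
    and Z: "\<forall>i\<in>F. \<forall>k. (V ** B)$i$k = 0"
    and Srj: "\<forall>z::rat^'n. (\<forall>i\<in>F. z$i = 0) \<longrightarrow> (\<exists>y. ratM (V ** B) *v y = z)"
  shows "x \<in> Lset B \<longleftrightarrow> (\<forall>j\<in>F. (V *v x)$j = 0)"
proof
  assume "x \<in> Lset B"
  then obtain y where y: "ratM B *v y = ratv x" unfolding Lset_def by blast
  have "ratM (V ** B) *v y = ratv (V *v x)"
    by (simp add: ratM_mult ratv_mult matrix_vector_mul_assoc[symmetric] y)
  then have e: "\<forall>i. (\<Sum>k\<in>UNIV. of_int ((V ** B)$i$k) * y$k) = (of_int ((V *v x)$i) :: rat)"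
    by (simp add: vec_eq_iff ratM_vec_comp ratv_def)
  show "\<forall>j\<in>F. (V *v x)$j = 0"
  proof
    fix j assume j: "j \<in> F"
    have "(\<Sum>k\<in>UNIV. of_int ((V ** B)$j$k) * y$k) = (0::rat)" using Z j by simp
    then show "(V *v x)$j = 0" using e[rule_format, of j] by simp
  qed
next
  assume "\<forall>j\<in>F. (V *v x)$j = 0"
  then have "\<forall>j\<in>F. (ratv (V *v x))$j = 0" by (simp add: ratv_def)
  then obtain y where y: "ratM (V ** B) *v y = ratv (V *v x)" using Srj by blast
  have "ratM B *v y = ratM (U ** (V ** B)) *v y"
    by (simp add: matrix_mul_assoc VU)
  also have "\<dots> = ratM U *v (ratM (V ** B) *v y)"
    by (subst ratM_mult) (rule matrix_vector_mul_assoc[symmetric])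
  also have "\<dots> = ratM U *v ratv (V *v x)"
    by (simp only: y)
  also have "\<dots> = ratv x"
    by (simp add: ratv_mult[symmetric] matrix_vector_mul_assoc VU)
  finally show "x \<in> Lset B" unfolding Lset_def by blast
qed

lemma clear_denom:
  fixes y :: "rat^'n::finite"
  shows "\<exists>k::int. k > 0 \<and> (\<exists>z. ratv z = of_int k *s y)"
proof -
  define q where "q i = quotient_of (y$i)" for i
  define k where "k = (\<Prod>i\<in>UNIV. snd (q i))"
  have pos: "snd (q i) > 0" for i unfolding q_def by (rule quotient_of_denom_pos') 
  have yi: "y$i = of_int (fst (q i)) / of_int (snd (q i))" for i
    unfolding q_def by (rule quotient_of_div) simp
  have kpos: "k > 0" unfolding k_def using pos by (simp add: prod_pos)
  define z where "z = (\<chi> i. fst (q i) * (\<Prod>j\<in>UNIV-{i}. snd (q j)))"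
  have "ratv z = of_int k *s y"
  proof (subst vec_eq_iff, intro allI)
    fix i
    have "k = snd (q i) * (\<Prod>j\<in>UNIV-{i}. snd (q j))"
      unfolding k_def by (simp add: prod.remove)
    then have "of_int k * y$i = of_int (fst (q i) * (\<Prod>j\<in>UNIV-{i}. snd (q j)))"
      using pos[of i] by (simp add: yi field_simps)
    then show "ratv z $ i = (of_int k *s y) $ i" by (simp add: ratv_def z_def)
  qed
  then show ?thesis using kpos by blast
qed

lemma tors_eq:
  fixes B :: "int^'n::finite^'n"
  shows "quot_tors UNIV (range ((*v) B)) = Lset B"
proof (intro set_eqI iffI)
  fix x assume "x \<in> quot_tors UNIV (range ((*v) B))"
  then obtain k z where k: "k \<noteq> 0" "k *s x = B *v z" unfolding quot_tors_def by auto
  have "ratM B *v ((1 / of_int k) *s ratv z) = (1 / of_int k) *s ratv (B *v z)"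
    by (simp add: ratv_mult vec.scale)
  also have "\<dots> = ratv x" using k by (simp add: k(2)[symmetric] ratv_smult)
  finally show "x \<in> Lset B" unfolding Lset_def by blast
next
  fix x assume "x \<in> Lset B"
  then obtain y where y: "ratM B *v y = ratv x" unfolding Lset_def by blast
  obtain k z where k: "k > 0" "ratv z = of_int k *s y" using clear_denom by blast
  have "ratv (B *v z) = ratv (k *s x)"
    by (simp add: ratv_mult k(2) vec.scale y ratv_smult)
  then have "k *s x = B *v z" by (metis ratv_inj)
  then have r: "k *s x \<in> range ((*v) B)" by (metis rangeI)
  have "\<exists>k. k \<noteq> 0 \<and> k *s x \<in> range ((*v) B)" using k(1) r by (intro exI[of _ k]) auto
  then show "x \<in> quot_tors UNIV (range ((*v) B))" unfolding quot_tors_def by simp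
qed


section \<open>Rank\<close>

lemma mv_smult:
  fixes A :: "int^'m^'n::finite"
  shows "A *v (c *s x) = c *s (A *v x)"
  by (simp add: matrix_vector_mult_def vec_eq_iff sum_distrib_left mult_ac)

lemma mv_sum:
  fixes A :: "int^'m^'n::finite"
  shows "A *v (\<Sum>s\<in>S. f s) = (\<Sum>s\<in>S. A *v f s)"
  by (induction S rule: infinite_finite_induct) (auto simp: matrix_vector_right_distrib)

lemma ratv_sum: "ratv (\<Sum>s\<in>S. f s) = (\<Sum>s\<in>S. ratv (f s))"
  by (induction S rule: infinite_finite_induct) (auto simp: ratv_add ratv_0)

lemma range_sub_Lset:
  fixes B :: "int^'n::finite^'n"
  shows "range ((*v) B) \<subseteq> Lset B"
  unfolding Lset_def by (auto simp: ratv_mult)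

lemma Ints_clear:
  fixes a :: "'a \<Rightarrow> rat"
  assumes "finite S"
  shows "\<exists>k::int. k > 0 \<and> (\<forall>s\<in>S. of_int k * a s \<in> \<int>)"
proof -
  define q where "q s = quotient_of (a s)" for s
  define k where "k = (\<Prod>s\<in>S. snd (q s))"
  have pos: "snd (q s) > 0" for s unfolding q_def by (rule quotient_of_denom_pos')
  have ai: "a s = of_int (fst (q s)) / of_int (snd (q s))" for s
    unfolding q_def by (rule quotient_of_div) simp
  have kpos: "k > 0" unfolding k_def using pos by (simp add: prod_pos)
  have "of_int k * a s \<in> \<int>" if s: "s \<in> S" for s
  proof -
    have "k = snd (q s) * (\<Prod>j\<in>S-{s}. snd (q j))"
      unfolding k_def using assms s by (simp add: prod.remove)
    then have eq: "of_int k * a s = of_int (fst (q s) * (\<Prod>j\<in>S-{s}. snd (q j)))"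
      using pos[of s] by (simp add: ai field_simps)
    show ?thesis unfolding eq by (rule Ints_of_int)
  qed
  then show ?thesis using kpos by blast
qed

lemma rank_eq:
  fixes B :: "int^'n::finite^'n"
  assumes VU: "V ** U = mat 1" "U ** V = mat 1"
    and Z: "\<forall>i\<in>F. \<forall>k. (V ** B)$i$k = 0"
    and Srj: "\<forall>z::rat^'n. (\<forall>i\<in>F. z$i = 0) \<longrightarrow> (\<exists>y. ratM (V ** B) *v y = z)"
  shows "quot_rank UNIV (range ((*v) B)) = card F"
proof -
  note LC = Lset_char[OF VU Z Srj]
  have tors: "x \<in> Lset B \<Longrightarrow> \<exists>k::int. k \<noteq> 0 \<and> k *s x \<in> range ((*v) B)" for x
    using tors_eq[of B] unfolding quot_tors_def by blast
  define e where "e j = U *v axis j (1::int)" for j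
  define S0 where "S0 = e ` F"
  have inje: "inj e"
  proof (rule injI)
    fix i j assume "e i = e j"
    then have "V *v e i = V *v e j" by simp
    then have "axis i (1::int) = axis j 1" unfolding e_def by (simp add: matrix_vector_mul_assoc VU)
    then show "i = j" by (simp add: axis_eq_axis)
  qed
  have S0ind: "quot_independent (range ((*v) B)) S0"
    unfolding quot_independent_def
  proof (intro conjI allI impI ballI)
    show "finite S0" unfolding S0_def by simp
  next
    fix c :: "int^'n \<Rightarrow> int" and s
    assume inr: "(\<Sum>s\<in>S0. c s *s s) \<in> range ((*v) B)" and s: "s \<in> S0"
    then have "(\<Sum>s\<in>S0. c s *s s) \<in> Lset B" using range_sub_Lset by blast
    then have z: "\<forall>j\<in>F. (V *v (\<Sum>s\<in>S0. c s *s s))$j = 0" using LC by blast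
    have "V *v (\<Sum>s\<in>S0. c s *s s) = (\<Sum>j\<in>F. c (e j) *s axis j 1)"
      unfolding mv_sum mv_smult S0_def using inje
      by (simp add: sum.reindex inj_on_def e_def matrix_vector_mul_assoc VU)
    moreover obtain j where j: "j \<in> F" "s = e j" using s unfolding S0_def by blast
    moreover have "(\<Sum>j'\<in>F. c (e j') *s axis j' (1::int))$j = c (e j)"
    proof -
      have "(\<Sum>j'\<in>F. c (e j') *s axis j' (1::int))$j = (\<Sum>j'\<in>F. (if j' = j then c (e j') else 0))"
        by (simp add: sum_component axis_def if_distrib[of "\<lambda>u. _ * u"] cong: if_cong)
      also have "\<dots> = c (e j)" using j(1) by simp
      finally show ?thesis .
    qed
    ultimately show "c s = 0" using z by auto
  qed
  have cS0: "card S0 = card F" unfolding S0_def by (rule card_image) (use inje in \<open>simp add: inj_on_def\<close>)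
  define pr where "pr x = (\<chi> j. if j \<in> F then (V *v x)$j else 0)" for x :: "int^'n"
  have pr_lin: "pr (\<Sum>s\<in>S. c s *s s) = (\<Sum>s\<in>S. c s *s pr s)" for S :: "(int^'n) set" and c
    unfolding pr_def mv_sum mv_smult by (simp add: vec_eq_iff sum_component)
  have pr0: "x \<in> Lset B" if px: "pr x = 0" for x
  proof -
    have "\<forall>j\<in>F. (V *v x)$j = 0"
    proof
      fix j assume j: "j \<in> F"
      have "(pr x)$j = 0" using px by simp
      then show "(V *v x)$j = 0" using j by (simp add: pr_def)
    qed
    then show ?thesis using LC by blast
  qed
  define w where "w s = ratv (pr s)" for s
  have upper: "card S \<le> card F" if ind: "quot_independent (range ((*v) B)) S" for S
  proof (rule ccontr)
    assume big: "\<not> card S \<le> card F"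
    have finS: "finite S" using ind unfolding quot_independent_def by blast
    have indc: "\<And>c. (\<Sum>s\<in>S. c s *s s) \<in> range ((*v) B) \<Longrightarrow> \<forall>s\<in>S. c s = 0"
      using ind unfolding quot_independent_def by blast
    have key: "\<forall>s\<in>S. c s = 0" if "pr (\<Sum>s\<in>S. c s *s s) = 0" for c
    proof -
      have "(\<Sum>s\<in>S. c s *s s) \<in> Lset B" using pr0 that by blast
      then obtain k where k: "k \<noteq> 0" "k *s (\<Sum>s\<in>S. c s *s s) \<in> range ((*v) B)" using tors by blast
      have "k *s (\<Sum>s\<in>S. c s *s s) = (\<Sum>s\<in>S. (k * c s) *s s)"
        by (simp add: vec_eq_iff sum_component sum_distrib_left mult.assoc)
      then have "\<forall>s\<in>S. k * c s = 0" using indc[of "\<lambda>s. k * c s"] k(2) by simp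
      then show ?thesis using k(1) by simp
    qed
    show False
    proof (cases "inj_on w S")
      case False
      then obtain s s' where ss: "s \<in> S" "s' \<in> S" "s \<noteq> s'" "w s = w s'"
        unfolding inj_on_def by blast
      have prs: "pr s = pr s'" using ss(4) unfolding w_def by (rule ratv_inj)
      define c where "c t = (if t = s then 1 else if t = s' then -1 else (0::int))" for t
      have "(\<Sum>t\<in>S. c t *s pr t) = (\<Sum>t\<in>{s, s'}. c t *s pr t)"
        by (rule sum.mono_neutral_right) (use finS ss in \<open>auto simp: c_def\<close>)
      also have "\<dots> = 0" using ss(3) prs by (simp add: c_def, simp add: vec_eq_iff)
      finally have "pr (\<Sum>t\<in>S. c t *s t) = 0" unfolding pr_lin .
      then have "c s = 0" using key ss(1) by blast
      then show False unfolding c_def by simp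
    next
      case True
      let ?E = "(\<lambda>j. axis j (1::rat)) ` F"
      have wspan: "w s \<in> vec.span ?E" for s
      proof -
        have "w s = (\<Sum>j\<in>F. (w s $ j) *s axis j 1)"
        proof (subst vec_eq_iff, intro allI)
          fix i
          have "(\<Sum>j\<in>F. (w s $ j) *s axis j (1::rat))$i = (\<Sum>j\<in>F. if j = i then w s $ j else 0)"
            unfolding sum_component by (intro sum.cong) (auto simp: axis_def)
          also have "\<dots> = w s $ i"
            by (cases "i \<in> F") (auto simp: w_def pr_def ratv_def)
          finally show "w s $ i = (\<Sum>j\<in>F. (w s $ j) *s axis j (1::rat))$i" by simp
        qed
        also have "\<dots> \<in> vec.span ?E"
          by (intro vec.span_sum vec.span_scale vec.span_base) auto
        finally show ?thesis .
      qed
      have dep: "vec.dependent (w ` S)"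
      proof (rule ccontr)
        assume ind2: "vec.independent (w ` S)"
        have "card (w ` S) \<le> vec.dim (vec.span ?E)"
          by (rule vec.independent_card_le_dim[OF _ ind2]) (use wspan in auto)
        also have "\<dots> \<le> card ?E" by (rule vec.dim_le_card) auto
        also have "\<dots> \<le> card F" by (rule card_image_le) simp
        finally show False using big card_image[OF True] by simp
      qed
      then obtain T u where Tu: "finite T" "T \<subseteq> w ` S" "(\<Sum>v\<in>T. u v *s v) = 0" "\<exists>v\<in>T. u v \<noteq> 0"
        unfolding vec.dependent_explicit by blast
      define a where "a s = (if w s \<in> T then u (w s) else 0)" for s
      have "(\<Sum>s\<in>S. a s *s w s) = (\<Sum>s\<in>{s\<in>S. w s \<in> T}. u (w s) *s w s)"
        unfolding a_def by (rule sum.mono_neutral_cong_right) (use finS in auto)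
      also have "\<dots> = (\<Sum>v\<in>w ` {s\<in>S. w s \<in> T}. u v *s v)"
      proof -
        have inj2: "inj_on w {s\<in>S. w s \<in> T}" using True by (rule inj_on_subset) auto
        show ?thesis by (simp add: sum.reindex[OF inj2])
      qed
      also have "w ` {s\<in>S. w s \<in> T} = T" using Tu(2) by auto
      finally have asum: "(\<Sum>s\<in>S. a s *s w s) = 0" using Tu(3) by simp
      obtain k where k: "k > 0" "\<forall>s\<in>S. of_int k * a s \<in> \<int>" using Ints_clear[OF finS] by blast
      define c where "c s = (SOME m::int. of_int m = of_int k * a s)" for s
      have cs: "of_int (c s) = of_int k * a s" if "s \<in> S" for s
      proof -
        have "of_int k * a s \<in> \<int>" using k(2) that by blast
        then have "\<exists>m::int. of_int m = of_int k * a s" by (auto elim!: Ints_cases)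
        then show ?thesis unfolding c_def by (rule someI_ex)
      qed
      have "ratv (pr (\<Sum>s\<in>S. c s *s s)) = (\<Sum>s\<in>S. of_int (c s) *s w s)"
        unfolding pr_lin ratv_sum ratv_smult w_def ..
      also have "\<dots> = (\<Sum>s\<in>S. of_int k *s (a s *s w s))"
        by (intro sum.cong refl) (simp add: cs vector_smult_assoc)
      also have "\<dots> = of_int k *s (\<Sum>s\<in>S. a s *s w s)"
        by (simp add: vec.scale_sum_right)
      also have "\<dots> = ratv 0" using asum by (simp add: ratv_0)
      finally have "pr (\<Sum>s\<in>S. c s *s s) = 0" by (rule ratv_inj)
      then have c0: "\<forall>s\<in>S. c s = 0" by (rule key)
      obtain v where v: "v \<in> T" "u v \<noteq> 0" using Tu(4) by blast
      then obtain s0 where s0: "s0 \<in> S" "v = w s0" using Tu(2) by blast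
      have "of_int k * a s0 = 0" using cs[OF s0(1)] c0 s0(1) by simp
      then have "a s0 = 0" using k(1) by simp
      then show False using v s0 unfolding a_def by simp
    qed
  qed
  have "Sup {card S |S. S \<subseteq> UNIV \<and> quot_independent (range ((*v) B)) S} = card F"
    by (rule cSup_eq_maximum) (use S0ind cS0 upper in \<open>force+\<close>)
  then show ?thesis unfolding quot_rank_def .
qed


section \<open>Polynomial part\<close>

definition PP :: "int^'n^'m \<Rightarrow> int^'n^'m \<Rightarrow> int poly^'n^'m" where
  "PP X Y = (\<chi> i j. [:X$i$j, Y$i$j:])"

definition PCm :: "int^'n^'m \<Rightarrow> int poly^'n^'m" where
  "PCm X = (\<chi> i j. [:X$i$j:])"

lemma matrix_sub_ldistrib': "(A::'a::ring_1^'n::finite^'m) ** (B - C) = A ** B - A ** C"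
  by (simp add: matrix_matrix_mult_def vec_eq_iff sum_subtractf algebra_simps)

lemma matrix_sub_rdistrib': "((B - C) ** (A::'a::ring_1^'p^'n::finite)) = B ** A - C ** A"
  by (simp add: matrix_matrix_mult_def vec_eq_iff sum_subtractf algebra_simps)

lemma coeff_pair: "coeff [:x, y:] n = (if n = 0 then x else if n = 1 then y else 0)"
  by (cases n) (auto simp: coeff_pCons' split: nat.splits)

lemma PP_conj:
  fixes V :: "int^'n::finite^'n" and U X Y :: "int^'n^'n"
  shows "PCm V ** PP X Y ** PCm U = PP (V ** X ** U) (V ** Y ** U)"
proof -
  have "coeff ((PCm V ** PP X Y ** PCm U)$i$j) n = coeff ((PP (V ** X ** U) (V ** Y ** U))$i$j) n" for i j n
    by (simp add: PCm_def PP_def matrix_matrix_mult_def coeff_sum coeff_pair sum_distrib_right sum_distrib_left mult_ac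
        if_distrib[of "\<lambda>u. _ * u"] if_distrib[of "\<lambda>u. u * _"] cong: if_cong)
  then show ?thesis by (simp add: vec_eq_iff poly_eq_iff)
qed

lemma det_PCm: "det (PCm X) = [:det X:]"
  unfolding PCm_def by (rule det_hom[symmetric]) (auto simp: one_pCons)

lemma det_rows_scale:
  fixes R :: "'n::finite \<Rightarrow> 'a::comm_ring_1^'n"
  assumes "finite J"
  shows "det (\<chi> i. if i \<in> J then c *s R i else R i) = c ^ card J * det (\<chi> i. R i)"
  using assms
proof (induction J rule: finite_induct)
  case empty then show ?case by simp
next
  case (insert a J)
  have "(\<chi> i. if i \<in> insert a J then c *s R i else R i) =
     (\<chi> i. if i = a then c *s R a else (if i \<in> J then c *s R i else R i))"
    by (auto simp: vec_eq_iff)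
  then have "det (\<chi> i. if i \<in> insert a J then c *s R i else R i) =
     c * det (\<chi> i. if i = a then R a else (if i \<in> J then c *s R i else R i))"
    using det_row_mul[of a c "\<lambda>_. R a" "\<lambda>i. if i \<in> J then c *s R i else R i"] by simp
  also have "(\<chi> i. if i = a then R a else (if i \<in> J then c *s R i else R i)) = (\<chi> i. if i \<in> J then c *s R i else R i)"
    using insert.hyps by (auto simp: vec_eq_iff)
  finally show ?case using insert by simp
qed

lemma pcompose_pow: "pcompose (p ^ n) q = (pcompose p q) ^ n"
  by (induction n) (simp_all add: pcompose_mult pcompose_1)


lemma poly_main:
  fixes A V U :: "int^'n::finite^'n" and F :: "'n set"
  defines "B \<equiv> mat 1 - A"
  defines "M \<equiv> V ** B ** U"
  defines "K' \<equiv> (\<chi> i k. if i \<in> F then (if i = k then 1 else 0) else [:M$i$k, M$i$k - (if i = k then 1 else 0):]) :: int poly^'n^'n"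
  assumes VU: "V ** U = mat 1" and Mrows: "\<forall>i\<in>F. \<forall>k. M$i$k = 0"
  shows "pcompose (det (\<chi> i j. (if i = j then 1 else 0) - [:0, A$i$j:])) [:1,1:] = [:0,-1:]^card F * det K'"
    and "poly (det K') 0 = det (\<chi> i k. if i \<in> F then (if i = k then 1 else 0) else M$i$k)"
proof -
  have "pcompose (det (\<chi> i j. (if i = j then 1 else 0) - [:0, A$i$j:])) [:1,1:] =
     det (\<chi> i j. pcompose ((\<chi> i j. (if i = j then 1 else 0) - [:0, A$i$j:])$i$j) [:1,1:])"
    by (rule det_hom) (auto simp: pcompose_add pcompose_mult pcompose_uminus pcompose_1)
  also have "(\<chi> i j. pcompose ((\<chi> i j. (if i = j then 1 else 0) - [:0, A$i$j:])$i$j) [:1,1:]) = PP B (-A)"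
    by (auto simp: vec_eq_iff PP_def B_def pcompose_diff pcompose_pCons pcompose_1 one_pCons mat_def)
  finally have e1: "pcompose (det (\<chi> i j. (if i = j then 1 else 0) - [:0, A$i$j:])) [:1,1:] = det (PP B (-A))" .
  have dVU: "det V * det U = 1" using VU by (metis det_I det_mul)
  have "det (PCm V ** PP B (-A) ** PCm U) = det (PP B (-A))"
    unfolding det_mul det_PCm using dVU
    by (simp add: mult.commute mult.left_commute one_pCons)
  moreover have "V ** (-A) ** U = M - mat 1"
  proof -
    have "-A = B - mat 1" unfolding B_def by simp
    then show ?thesis unfolding M_def by (simp add: matrix_sub_ldistrib' matrix_sub_rdistrib' VU)
  qed
  ultimately have e2: "det (PP B (-A)) = det (PP M (M - mat 1))"
    unfolding PP_conj M_def by simp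
  define c :: "int poly" where "c = [:0,-1:]"
  have Keq: "PP M (M - mat 1) = (\<chi> i. if i \<in> F then c *s K'$i else K'$i)"
    using Mrows by (auto simp: vec_eq_iff PP_def K'_def c_def mat_def one_pCons)
  have "det (PP M (M - mat 1)) = c ^ card F * det (\<chi> i. K'$i)"
    unfolding Keq by (rule det_rows_scale) simp
  then show "pcompose (det (\<chi> i j. (if i = j then 1 else 0) - [:0, A$i$j:])) [:1,1:] = [:0,-1:]^card F * det K'"
    using e1 e2 unfolding c_def by simp
  have "poly (det K') 0 = det (\<chi> i k. poly (K'$i$k) 0)"
    by (rule det_hom) auto
  also have "(\<chi> i k. poly (K'$i$k) 0) = (\<chi> i k. if i \<in> F then (if i = k then 1 else 0) else M$i$k)"
    by (auto simp: vec_eq_iff K'_def)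
  finally show "poly (det K') 0 = det (\<chi> i k. if i \<in> F then (if i = k then 1 else 0) else M$i$k)" .
qed

definition pcF :: "'n set \<Rightarrow> int^'n \<Rightarrow> int^'n" where
  "pcF F x = (\<chi> i. if i \<in> F then 0 else x$i)"

definition pjF :: "'n set \<Rightarrow> int^'n \<Rightarrow> int^'n" where
  "pjF F x = (\<chi> i. if i \<in> F then x$i else 0)"

lemma pcF_diff: "pcF F (x - y) = pcF F x - pcF F y"
  by (simp add: pcF_def vec_eq_iff)

lemma pcF_add: "pcF F (x + y) = pcF F x + pcF F y"
  by (simp add: pcF_def vec_eq_iff)

lemma pjF_add: "pjF F (x + y) = pjF F x + pjF F y"
  by (simp add: pjF_def vec_eq_iff)

lemma pcF_pjF: "pcF F (pjF F x) = 0" and pjF_pjF: "pjF F (pjF F x) = pjF F x"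
  and pcF_pjF_sum: "pcF F x + pjF F x = x"
  by (auto simp: pcF_def pjF_def vec_eq_iff)

lemma pcF_id: "\<forall>i\<in>F. x$i = 0 \<Longrightarrow> pcF F x = x" and pjF_0: "\<forall>i\<in>F. x$i = 0 \<Longrightarrow> pjF F x = 0"
  by (auto simp: pcF_def pjF_def vec_eq_iff)

lemma matrix_add_rdistrib': "((B + C) ** (A::'a::ring_1^'p^'n::finite)) = B ** A + C ** A"
  by (simp add: matrix_matrix_mult_def vec_eq_iff sum.distrib algebra_simps)

lemma sgrp_Lset: "sgrp (Lset B)"
  unfolding sgrp_def Lset_def
proof (intro conjI ballI)
  show "0 \<in> {x. \<exists>y. ratM B *v y = ratv x}" by (auto simp: ratv_0 intro: exI[of _ 0])
next
  fix x y assume "x \<in> {x. \<exists>y. ratM B *v y = ratv x}" "y \<in> {x. \<exists>y. ratM B *v y = ratv x}"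
  then obtain u v where "ratM B *v u = ratv x" "ratM B *v v = ratv y" by auto
  then have "ratM B *v (u - v) = ratv (x - y)" by (simp add: matrix_vector_mult_diff_distrib ratv_diff)
  then show "x - y \<in> {x. \<exists>y. ratM B *v y = ratv x}" by blast
qed

lemma index_main:
  fixes B V U :: "int^'n::finite^'n" and F :: "'n set"
  defines "M \<equiv> V ** B ** U"
  defines "M' \<equiv> (\<chi> i k. if i \<in> F then (if i = k then 1 else 0) else M$i$k) :: int^'n^'n"
  assumes VU: "V ** U = mat 1" "U ** V = mat 1"
    and Z: "\<forall>i\<in>F. \<forall>k. (V ** B)$i$k = 0"
    and Srj: "\<forall>z::rat^'n. (\<forall>i\<in>F. z$i = 0) \<longrightarrow> (\<exists>y. ratM (V ** B) *v y = z)"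
    and dM': "det M' \<noteq> 0"
  shows "qc (Lset B) ((*v) B ` Lset B) = nat \<bar>det M'\<bar> \<and> finite (cosets (Lset B) ((*v) B ` Lset B))"
proof -
  note LC = Lset_char[OF VU Z Srj]
  have Mrows: "M$i$k = 0" if "i \<in> F" for i k
    unfolding M_def matrix_matrix_mult_def[of "V ** B" U] using Z that by simp
  have Mv0: "(M *v v)$i = 0" if "i \<in> F" for i v
    unfolding matrix_vector_mult_def using Mrows[OF that] by simp
  define M'' :: "int^'n^'n" where "M'' = (\<chi> i k. if k \<in> F then (if i = k then 1 else 0) else M$i$k)"
  define N :: "int^'n^'n" where "N = (\<chi> i l. if l \<in> F then M$i$l else 0)"
  have NN: "N ** N = 0"
  proof -
    have "N$i$l * N$l$k = 0" for i l k by (cases "l \<in> F") (auto simp: N_def Mrows)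
    then show ?thesis by (auto simp: vec_eq_iff matrix_matrix_mult_def intro!: sum.neutral)
  qed
  have u1: "(mat 1 - N) ** (mat 1 + N) = mat 1"
    by (simp add: matrix_sub_rdistrib' matrix_add_ldistrib NN)
  have u2: "(mat 1 + N) ** (mat 1 - N) = mat 1"
    by (simp add: matrix_add_rdistrib' matrix_sub_ldistrib' NN)
  have uN: "unimod (mat 1 - N)" unfolding unimod_def using u1 u2 by blast
  have NM': "(N ** M')$i$k = (if k \<in> F then M$i$k else 0)" for i k
  proof -
    have "N$i$l * M'$l$k = (if l = k then (if k \<in> F then M$i$k else 0) else 0)" for l
      by (cases "l \<in> F") (auto simp: N_def M'_def)
    then show ?thesis by (simp add: matrix_matrix_mult_def)
  qed
  have M''eq: "M'' = (mat 1 - N) ** M'"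
  proof -
    have M'e: "M'$i$k = (if i \<in> F then (if i = k then 1 else 0) else M$i$k)" for i k
      by (simp add: M'_def)
    show ?thesis unfolding matrix_sub_rdistrib' matrix_mul_lid
      by (auto simp: vec_eq_iff NM' M''_def M'e Mrows)
  qed
  have idxM'': "idx M'' = nat \<bar>det M'\<bar> \<and> finite (cosets UNIV (range ((*v) M'')))"
    using idx_left[OF uN, of M'] CT2[OF dM'] unfolding M''eq by simp
  have M''v: "M'' *v a = M *v pcF F a + pjF F a" for a
  proof -
    have "(M'' *v a)$i = (M *v pcF F a + pjF F a)$i" for i
    proof -
      have "(M'' *v a)$i = (\<Sum>k\<in>UNIV. (if k \<in> F then 0 else M$i$k * a$k) + (if k = i then (if i \<in> F then a$i else 0) else 0))"
        unfolding M''_def matrix_vector_mult_def vec_lambda_beta by (intro sum.cong refl) auto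
      also have "\<dots> = (M *v pcF F a + pjF F a)$i"
        unfolding sum.distrib by (simp add: matrix_vector_mult_def pcF_def pjF_def if_distrib[of "\<lambda>u. _ * u"] cong: if_cong)
      finally show ?thesis .
    qed
    then show ?thesis by (simp add: vec_eq_iff)
  qed
  define f where "f x = U *v pcF F x" for x
  have VUv: "V *v (U *v x) = x" "U *v (V *v x) = x" for x by (simp_all add: matrix_vector_mul_assoc VU)
  have img: "f ` UNIV = Lset B"
  proof (intro set_eqI iffI)
    fix l assume "l \<in> f ` UNIV"
    then obtain x where "l = f x" by blast
    then have "V *v l = pcF F x" unfolding f_def by (simp add: VUv)
    then show "l \<in> Lset B" using LC by (simp add: pcF_def)
  next
    fix l assume "l \<in> Lset B"
    then have "\<forall>j\<in>F. (V *v l)$j = 0" using LC by blast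
    then have "f (V *v l) = l" unfolding f_def by (simp add: pcF_id VUv)
    then show "l \<in> f ` UNIV" by (metis rangeI)
  qed
  have cond: "\<forall>x\<in>UNIV. \<forall>y\<in>UNIV. x - y \<in> range ((*v) M'') \<longleftrightarrow> f x - f y \<in> (*v) B ` Lset B"
  proof (intro ballI)
    fix x y :: "int^'n"
    define w where "w = x - y"
    have fw: "f x - f y = U *v pcF F w"
      unfolding f_def w_def pcF_diff by (simp add: matrix_vector_mult_diff_distrib)
    have "w \<in> range ((*v) M'') \<longleftrightarrow> U *v pcF F w \<in> (*v) B ` Lset B"
    proof
      assume "w \<in> range ((*v) M'')"
      then obtain a where a: "w = M'' *v a" by blast
      have "pcF F w = M *v pcF F a"
        unfolding a M''v pcF_add pcF_pjF using Mv0 by (simp add: pcF_id)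
      then have "U *v pcF F w = B *v (U *v pcF F a)"
        unfolding M_def by (simp add: matrix_vector_mul_assoc[symmetric] VUv)
      moreover have "U *v pcF F a \<in> Lset B" using img unfolding f_def by blast
      ultimately show "U *v pcF F w \<in> (*v) B ` Lset B" by blast
    next
      assume "U *v pcF F w \<in> (*v) B ` Lset B"
      then obtain l where l: "l \<in> Lset B" "U *v pcF F w = B *v l" by blast
      have pw: "pcF F w = V *v (B *v l)" using l(2) by (metis VUv(1))
      have Vl: "\<forall>j\<in>F. (V *v l)$j = 0" using LC l(1) by blast
      define a where "a = V *v l + pjF F w"
      have "M'' *v a = M *v (V *v l) + pjF F w"
        unfolding M''v a_def pcF_add pjF_add pcF_pjF pjF_pjF using Vl by (simp add: pcF_id pjF_0)
      also have "M *v (V *v l) = pcF F w"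
        unfolding M_def pw by (simp add: matrix_vector_mul_assoc[symmetric] VUv)
      finally have "M'' *v a = w" by (simp add: pcF_pjF_sum)
      then show "w \<in> range ((*v) M'')" by (metis rangeI)
    qed
    then show "x - y \<in> range ((*v) M'') \<longleftrightarrow> f x - f y \<in> (*v) B ` Lset B"
      using fw w_def by simp
  qed
  from qc_transfer[OF sgrp_range sgrp_image[OF sgrp_Lset] img cond]
  show ?thesis using idxM'' unfolding idx_def by simp
qed


theorem theorem2p11:
  fixes src tgt :: "'e::finite \<Rightarrow> 'v::finite"
  assumes "strongly_connected src tgt"
    and "delta src tgt = 0"
  shows "of_nat (card_R src tgt) = \<bar>m_X src tgt\<bar>"
proof -
  define A where "A = adj src tgt"
  define B where "B = BF_mat src tgt"
  have BA: "B = mat 1 - A" unfolding A_def B_def BF_mat_def ..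
  obtain V F where V: "unimod V" and Z: "\<forall>i\<in>F. \<forall>k. (V ** B)$i$k = 0"
    and Srj: "\<forall>z::rat^'v. (\<forall>i\<in>F. z$i = 0) \<longrightarrow> (\<exists>y. ratM (V ** B) *v y = z)"
    using CT1[of B] by blast
  obtain U where VU: "V ** U = mat 1" "U ** V = mat 1" using V unfolding unimod_def by blast
  define M where "M = V ** B ** U"
  define M' :: "int^'v^'v" where "M' = (\<chi> i k. if i \<in> F then (if i = k then 1 else 0) else M$i$k)"
  define K' :: "int poly^'v^'v" where "K' = (\<chi> i k. if i \<in> F then (if i = k then 1 else 0) else [:M$i$k, M$i$k - (if i = k then 1 else 0):])"
  have Mrows: "\<forall>i\<in>F. \<forall>k. M$i$k = 0"
    unfolding M_def matrix_matrix_mult_def[of "V ** B" U] using Z by simp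
  have BFeq: "BF src tgt = (*v) B" unfolding BF_def B_def by (rule ext) simp
  have rank: "rank_BF src tgt = card F"
    unfolding rank_BF_def BFeq by (rule rank_eq[OF VU Z Srj])
  have rX: "r_X src tgt = card F" using assms(2) rank unfolding delta_def by simp
  define g where "g = g_poly src tgt"
  have gdef: "g = det (\<chi> i j. (if i = j then 1 else 0) - [:0, A$i$j:])"
    unfolding g_def g_poly_def A_def ..
  note PM = poly_main[where V=V and U=U and F=F and A=A, folded BA, folded M_def, folded K'_def, OF VU(1) Mrows]
  have comp: "pcompose g [:1,1:] = [:0,-1:]^card F * det K'" using PM(1) gdef by simp
  have c01: "[:0,-1:] = (monom (-1) 1 :: int poly)" by (simp add: monom_Suc monom_0)
  have gs: "g_star src tgt = (-1)^card F * det M'"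
  proof -
    have "g_star src tgt = coeff ([:0,-1:]^card F * det K') (card F)"
      unfolding g_star_def rX comp[unfolded g_def] ..
    also have "\<dots> = (-1)^card F * coeff (det K') 0"
      unfolding c01 monom_power coeff_monom_mult by simp
    also have "coeff (det K') 0 = det M'"
      using PM(2) unfolding M'_def by (simp add: poly_0_coeff_0)
    finally show ?thesis .
  qed
  have g0: "g \<noteq> 0"
  proof -
    have "poly g 0 = det (\<chi> i j. poly ((\<chi> i j. (if i = j then 1 else 0) - [:0, A$i$j:])$i$j) (0::int))"
      unfolding gdef by (rule det_hom) auto
    also have "(\<chi> i j. poly ((\<chi> i j. (if i = j then 1 else 0) - [:0, A$i$j:])$i$j) (0::int)) = mat 1"
      by (auto simp: vec_eq_iff mat_def)
    finally have "poly g 0 = 1" by simp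
    then show ?thesis by auto
  qed
  have dM': "det M' \<noteq> 0"
  proof
    assume d0: "det M' = 0"
    have "poly (det K') 0 = 0" using PM(2) d0 unfolding M'_def by simp
    then have "[:0,1:] dvd det K'" using dvd_iff_poly_eq_0[of 0 "det K'"] by simp
    then obtain q where q: "det K' = [:0,1:] * q" by (elim dvdE)
    have "pcompose g [:1,1:] = [:0,1:] ^ Suc (card F) * ((-1)^card F * q)"
    proof -
      have m: "[:0,-1:] = - [:0,1::int:]" by simp
      have "[:0,-1:] ^ card F = (-1) ^ card F * [:0,1::int:] ^ card F"
        unfolding m by (rule power_minus)
      then show ?thesis unfolding comp q by (simp add: mult_ac)
    qed
    moreover have pc01: "pcompose [:0,1::int:] [:-1,1:] = [:-1,1:]" by (simp add: pcompose_pCons)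
    ultimately have "pcompose (pcompose g [:1,1:]) [:-1,1:] = [:-1,1:] ^ Suc (card F) * pcompose ((-1)^card F * q) [:-1,1:]"
      by (simp only: pcompose_mult pcompose_pow)
    moreover have "pcompose (pcompose g [:1,1:]) [:-1,1:] = g"
      by (simp add: pcompose_assoc[symmetric] pcompose_pCons)
    ultimately have "[:-1,1:] ^ Suc (card F) dvd g" by (metis dvd_triv_left)
    moreover have "\<not> [:-1,1:] ^ Suc (order 1 g) dvd g" using order[OF g0, of 1] by simp
    moreover have "order 1 g = card F" using rX unfolding r_X_def g_def by simp
    ultimately show False by simp
  qed
  have IM: "qc (Lset B) ((*v) B ` Lset B) = nat \<bar>det M'\<bar> \<and> finite (cosets (Lset B) ((*v) B ` Lset B))"
    using index_main[where V=V and U=U and B=B and F=F, folded M_def, folded M'_def, OF VU Z Srj dM'] .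
  have Lx: "L_X src tgt = Lset B"
    unfolding L_X_def Lset_def BF_Q_def ratM_def ratv_def B_def ..
  have qc_eq: "quot_card G H = qc G H" for G H :: "(int^'v) set"
    unfolding quot_card_def qc_def cosets_def ..
  have tors: "tors_BF src tgt = qc (Lset B) (range ((*v) B))"
    unfolding tors_BF_def BFeq qc_eq tors_eq ..
  have cR: "card_R src tgt = qc (range ((*v) B)) ((*v) B ` Lset B)"
    unfolding card_R_def BFeq Lx qc_eq ..
  have sub1: "(*v) B ` Lset B \<subseteq> range ((*v) B)" by auto
  have mult: "qc (Lset B) ((*v) B ` Lset B) = qc (Lset B) (range ((*v) B)) * qc (range ((*v) B)) ((*v) B ` Lset B)"
    by (rule qc_mult'[OF sgrp_Lset sgrp_range sgrp_image[OF sgrp_Lset] sub1 range_sub_Lset conjunct2[OF IM]])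
  have absg: "\<bar>g_star src tgt\<bar> = \<bar>det M'\<bar>" unfolding gs by (simp add: abs_mult)
  have key: "nat \<bar>g_star src tgt\<bar> = tors_BF src tgt * card_R src tgt"
    using IM mult absg tors cR by simp
  have "nat \<bar>g_star src tgt\<bar> \<noteq> 0" using absg dM' by simp
  then have tpos: "tors_BF src tgt \<noteq> 0" using key by (metis mult_zero_left)
  have "\<bar>m_X src tgt\<bar> = of_int \<bar>g_star src tgt\<bar> / of_nat (tors_BF src tgt)"
    unfolding m_X_def by simp
  also have "of_int \<bar>g_star src tgt\<bar> = (of_nat (nat \<bar>g_star src tgt\<bar>) :: rat)" by simp
  also have "\<dots> = of_nat (tors_BF src tgt) * of_nat (card_R src tgt)" unfolding key by simp
  finally show ?thesis using tpos by simp
qed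

end
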